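(* Let $\mathcal{C}$ be a deflation-exact category and let $\mathcal{A}$ be a non-empty full subcategory satisfying axiom (A3). Consider a commutative diagram $$\begin{array}{ccccc} X&\rightarrowtail&Y&\twoheadrightarrow&Z\\ \downarrow&&\downarrow&&\downarrow\\ X'&\rightarrowtail&Y'&\twoheadrightarrow&Z'\end{array}$$ whose rows are conflations and whose vertical arrows are deflations. If $X'\in\mathcal{A}$, then the diagram can be completed to a commutative $3\times 3$ diagram $$\begin{array}{ccccc} X''&\rightarrowtail&Y''&\twoheadrightarrow&Z''\\ \downarrow&&\downarrow&&\downarrow\\ X&\rightarrowtail&Y&\twoheadrightarrow&Z\\ \downarrow&&\downarrow&&\downarrow\\ X'&\rightarrowtail&Y'&\twoheadrightarrow&Z'\end{array}$$ in which all rows and all columns are conflations (the upper vertical maps being inflations). Moreover, the upper left square is a pullback and the lower right square is a pushout.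
   Context: A conflation category is an additive category with a class of kernel-cokernel pairs (closed under isomorphisms) called conflations; first map an inflation ($\rightarrowtail$), second a deflation ($\twoheadrightarrow$). A deflation-exact category is a conflation category satisfying: (R0) $1_0$ is a deflation; (R1) composites of deflations are deflations; (R2) pullbacks of deflations along arbitrary morphisms exist and are deflations. Axiom (A3): if $a\colon C\rightarrowtail D$ is an inflation and $b\colon C\twoheadrightarrow A$ is a deflation with $A\in\mathcal{A}$, the pushout of $a$ along $b$ exists and yields a deflation $D\twoheadrightarrow P$ and an inflation $A\rightarrowtail P$. *)

theory Defs
  imports Main
begin

text \<open>An (abstract, small) category presented by objects, morphisms, source/target,
  composition (cmp C g f = g after f) and identities, together with the additive
  structure on hom-sets.\<close>

record ('o, 'm) addcat =
  Ob   :: "'o set"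
  Mor  :: "'m set"
  src  :: "'m \<Rightarrow> 'o"
  tgt  :: "'m \<Rightarrow> 'o"
  cmp  :: "'m \<Rightarrow> 'm \<Rightarrow> 'm"
  idm  :: "'o \<Rightarrow> 'm"
  madd :: "'m \<Rightarrow> 'm \<Rightarrow> 'm"
  mzero :: "'o \<Rightarrow> 'o \<Rightarrow> 'm"
  mneg :: "'m \<Rightarrow> 'm"

definition hom :: "('o, 'm, 'x) addcat_scheme \<Rightarrow> 'o \<Rightarrow> 'o \<Rightarrow> 'm set" where
  "hom C A B = {f \<in> Mor C. src C f = A \<and> tgt C f = B}"

definition is_zero_obj :: "('o, 'm, 'x) addcat_scheme \<Rightarrow> 'o \<Rightarrow> bool" where
  "is_zero_obj C Z \<longleftrightarrow> Z \<in> Ob C \<and>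
     (\<forall>A\<in>Ob C. (\<exists>!f. f \<in> hom C Z A) \<and> (\<exists>!f. f \<in> hom C A Z))"

definition additive_category :: "('o, 'm, 'x) addcat_scheme \<Rightarrow> bool" where
  "additive_category C \<longleftrightarrow>
    (\<forall>f\<in>Mor C. src C f \<in> Ob C \<and> tgt C f \<in> Ob C) \<and>
    (\<forall>A\<in>Ob C. idm C A \<in> hom C A A) \<and>
    (\<forall>A B D f g. f \<in> hom C A B \<longrightarrow> g \<in> hom C B D \<longrightarrow> cmp C g f \<in> hom C A D) \<and>
    (\<forall>f g h. f \<in> Mor C \<longrightarrow> g \<in> Mor C \<longrightarrow> h \<in> Mor C \<longrightarrow>
        tgt C f = src C g \<longrightarrow> tgt C g = src C h \<longrightarrow>
        cmp C h (cmp C g f) = cmp C (cmp C h g) f) \<and>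
    (\<forall>f\<in>Mor C. cmp C (idm C (tgt C f)) f = f \<and> cmp C f (idm C (src C f)) = f) \<and>
    (\<forall>A\<in>Ob C. \<forall>B\<in>Ob C. mzero C A B \<in> hom C A B \<and>
       (\<forall>f\<in>hom C A B. mneg C f \<in> hom C A B \<and>
          madd C f (mzero C A B) = f \<and> madd C f (mneg C f) = mzero C A B \<and>
          (\<forall>g\<in>hom C A B. madd C f g \<in> hom C A B \<and> madd C f g = madd C g f \<and>
             (\<forall>h\<in>hom C A B. madd C (madd C f g) h = madd C f (madd C g h))))) \<and>
    (\<forall>A B D f g h. f \<in> hom C A B \<longrightarrow> g \<in> hom C A B \<longrightarrow> h \<in> hom C B D \<longrightarrow>
        cmp C h (madd C f g) = madd C (cmp C h f) (cmp C h g)) \<and>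
    (\<forall>A B D f g k. f \<in> hom C B D \<longrightarrow> g \<in> hom C B D \<longrightarrow> k \<in> hom C A B \<longrightarrow>
        cmp C (madd C f g) k = madd C (cmp C f k) (cmp C g k)) \<and>
    (\<exists>Z. is_zero_obj C Z) \<and>
    (\<forall>A\<in>Ob C. \<forall>B\<in>Ob C. \<exists>S\<in>Ob C. \<exists>i1 i2 p1 p2.
        i1 \<in> hom C A S \<and> i2 \<in> hom C B S \<and> p1 \<in> hom C S A \<and> p2 \<in> hom C S B \<and>
        cmp C p1 i1 = idm C A \<and> cmp C p2 i2 = idm C B \<and>
        cmp C p2 i1 = mzero C A B \<and> cmp C p1 i2 = mzero C B A \<and>
        madd C (cmp C i1 p1) (cmp C i2 p2) = idm C S)"

definition is_kernel :: "('o, 'm, 'x) addcat_scheme \<Rightarrow> 'm \<Rightarrow> 'm \<Rightarrow> bool" where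
  "is_kernel C f g \<longleftrightarrow> f \<in> Mor C \<and> g \<in> Mor C \<and> tgt C f = src C g \<and>
     cmp C g f = mzero C (src C f) (tgt C g) \<and>
     (\<forall>T\<in>Ob C. \<forall>h\<in>hom C T (src C g). cmp C g h = mzero C T (tgt C g) \<longrightarrow>
        (\<exists>!u. u \<in> hom C T (src C f) \<and> cmp C f u = h))"

definition is_cokernel :: "('o, 'm, 'x) addcat_scheme \<Rightarrow> 'm \<Rightarrow> 'm \<Rightarrow> bool" where
  "is_cokernel C g f \<longleftrightarrow> f \<in> Mor C \<and> g \<in> Mor C \<and> tgt C f = src C g \<and>
     cmp C g f = mzero C (src C f) (tgt C g) \<and>
     (\<forall>T\<in>Ob C. \<forall>h\<in>hom C (tgt C f) T. cmp C h f = mzero C (src C f) T \<longrightarrow>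
        (\<exists>!u. u \<in> hom C (tgt C g) T \<and> cmp C u g = h))"

definition kc_pair :: "('o, 'm, 'x) addcat_scheme \<Rightarrow> 'm \<Rightarrow> 'm \<Rightarrow> bool" where
  "kc_pair C f g \<longleftrightarrow> is_kernel C f g \<and> is_cokernel C g f"

definition iso :: "('o, 'm, 'x) addcat_scheme \<Rightarrow> 'm \<Rightarrow> bool" where
  "iso C f \<longleftrightarrow> f \<in> Mor C \<and> (\<exists>g\<in>hom C (tgt C f) (src C f).
      cmp C g f = idm C (src C f) \<and> cmp C f g = idm C (tgt C f))"

text \<open>Conflations are given as a set Cf of composable pairs (inflation, deflation).\<close>
definition conflation_category :: "('o, 'm, 'x) addcat_scheme \<Rightarrow> ('m \<times> 'm) set \<Rightarrow> bool" where
  "conflation_category C Cf \<longleftrightarrow> additive_category C \<and>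
     (\<forall>(f, g)\<in>Cf. kc_pair C f g) \<and>
     (\<forall>f g f' g' a b c. (f, g) \<in> Cf \<longrightarrow> f' \<in> Mor C \<longrightarrow> g' \<in> Mor C \<longrightarrow>
        tgt C f' = src C g' \<longrightarrow> iso C a \<longrightarrow> iso C b \<longrightarrow> iso C c \<longrightarrow>
        src C a = src C f \<longrightarrow> tgt C a = src C f' \<longrightarrow>
        src C b = tgt C f \<longrightarrow> tgt C b = tgt C f' \<longrightarrow>
        src C c = tgt C g \<longrightarrow> tgt C c = tgt C g' \<longrightarrow>
        cmp C b f = cmp C f' a \<longrightarrow> cmp C c g = cmp C g' b \<longrightarrow> (f', g') \<in> Cf)"

definition inflation :: "('m \<times> 'm) set \<Rightarrow> 'm \<Rightarrow> bool" where
  "inflation Cf f \<longleftrightarrow> (\<exists>g. (f, g) \<in> Cf)"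

definition deflation :: "('m \<times> 'm) set \<Rightarrow> 'm \<Rightarrow> bool" where
  "deflation Cf g \<longleftrightarrow> (\<exists>f. (f, g) \<in> Cf)"

text \<open>Pullback square: f : A \<rightarrow> D, g : B \<rightarrow> D, q1 : P \<rightarrow> A, q2 : P \<rightarrow> B with f q1 = g q2.\<close>
definition is_pullback :: "('o, 'm, 'x) addcat_scheme \<Rightarrow> 'm \<Rightarrow> 'm \<Rightarrow> 'm \<Rightarrow> 'm \<Rightarrow> bool" where
  "is_pullback C f g q1 q2 \<longleftrightarrow> f \<in> Mor C \<and> g \<in> Mor C \<and> tgt C f = tgt C g \<and>
     q1 \<in> hom C (src C q1) (src C f) \<and> q2 \<in> hom C (src C q1) (src C g) \<and>
     cmp C f q1 = cmp C g q2 \<and>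
     (\<forall>T\<in>Ob C. \<forall>u\<in>hom C T (src C f). \<forall>v\<in>hom C T (src C g). cmp C f u = cmp C g v \<longrightarrow>
        (\<exists>!w. w \<in> hom C T (src C q1) \<and> cmp C q1 w = u \<and> cmp C q2 w = v))"

text \<open>Pushout square: a : A \<rightarrow> B, b : A \<rightarrow> D, r1 : B \<rightarrow> P, r2 : D \<rightarrow> P with r1 a = r2 b.\<close>
definition is_pushout :: "('o, 'm, 'x) addcat_scheme \<Rightarrow> 'm \<Rightarrow> 'm \<Rightarrow> 'm \<Rightarrow> 'm \<Rightarrow> bool" where
  "is_pushout C a b r1 r2 \<longleftrightarrow> a \<in> Mor C \<and> b \<in> Mor C \<and> src C a = src C b \<and>
     r1 \<in> hom C (tgt C a) (tgt C r1) \<and> r2 \<in> hom C (tgt C b) (tgt C r1) \<and>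
     cmp C r1 a = cmp C r2 b \<and>
     (\<forall>T\<in>Ob C. \<forall>u\<in>hom C (tgt C a) T. \<forall>v\<in>hom C (tgt C b) T. cmp C u a = cmp C v b \<longrightarrow>
        (\<exists>!w. w \<in> hom C (tgt C r1) T \<and> cmp C w r1 = u \<and> cmp C w r2 = v))"

definition deflation_exact :: "('o, 'm, 'x) addcat_scheme \<Rightarrow> ('m \<times> 'm) set \<Rightarrow> bool" where
  "deflation_exact C Cf \<longleftrightarrow> conflation_category C Cf \<and>
     (\<forall>Z. is_zero_obj C Z \<longrightarrow> deflation Cf (idm C Z)) \<and>
     (\<forall>p q. deflation Cf p \<longrightarrow> deflation Cf q \<longrightarrow> tgt C p = src C q \<longrightarrow>
        deflation Cf (cmp C q p)) \<and>
     (\<forall>p f. deflation Cf p \<longrightarrow> f \<in> Mor C \<longrightarrow> tgt C f = tgt C p \<longrightarrow>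
        (\<exists>q1 q2. is_pullback C f p q1 q2 \<and> deflation Cf q1))"

definition axiom_A3 :: "('o, 'm, 'x) addcat_scheme \<Rightarrow> ('m \<times> 'm) set \<Rightarrow> 'o set \<Rightarrow> bool" where
  "axiom_A3 C Cf AA \<longleftrightarrow>
     (\<forall>a b. inflation Cf a \<longrightarrow> deflation Cf b \<longrightarrow> src C a = src C b \<longrightarrow> tgt C b \<in> AA \<longrightarrow>
        (\<exists>r1 r2. is_pushout C a b r1 r2 \<and> deflation Cf r1 \<and> inflation Cf r2))"

end

theory Submission
  imports Defs
begin


locale dex =
  fixes C :: "('o, 'm, 'x) addcat_scheme" and Cf :: "('m \<times> 'm) set"
  assumes dex: "deflation_exact C Cf"
begin

lemma cc: "conflation_category C Cf" using dex unfolding deflation_exact_def by blast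
lemma ac: "additive_category C" using cc unfolding conflation_category_def by blast

lemmas acd = ac[unfolded additive_category_def]
lemma p1: "\<forall>f\<in>Mor C. src C f \<in> Ob C \<and> tgt C f \<in> Ob C" using acd by (rule conjunct1)
lemma p2: "\<forall>A\<in>Ob C. idm C A \<in> hom C A A" using acd[THEN conjunct2] by (rule conjunct1)
lemma p3: "\<forall>A B D f g. f \<in> hom C A B \<longrightarrow> g \<in> hom C B D \<longrightarrow> cmp C g f \<in> hom C A D"
  using acd[THEN conjunct2, THEN conjunct2] by (rule conjunct1)
lemma p4: "\<forall>f g h. f \<in> Mor C \<longrightarrow> g \<in> Mor C \<longrightarrow> h \<in> Mor C \<longrightarrow>
        tgt C f = src C g \<longrightarrow> tgt C g = src C h \<longrightarrow>
        cmp C h (cmp C g f) = cmp C (cmp C h g) f"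
  using acd[THEN conjunct2, THEN conjunct2, THEN conjunct2] by (rule conjunct1)
lemma p5: "\<forall>f\<in>Mor C. cmp C (idm C (tgt C f)) f = f \<and> cmp C f (idm C (src C f)) = f"
  using acd[THEN conjunct2, THEN conjunct2, THEN conjunct2, THEN conjunct2] by (rule conjunct1)
lemma p6: "\<forall>A\<in>Ob C. \<forall>B\<in>Ob C. mzero C A B \<in> hom C A B \<and>
       (\<forall>f\<in>hom C A B. mneg C f \<in> hom C A B \<and>
          madd C f (mzero C A B) = f \<and> madd C f (mneg C f) = mzero C A B \<and>
          (\<forall>g\<in>hom C A B. madd C f g \<in> hom C A B \<and> madd C f g = madd C g f \<and>
             (\<forall>h\<in>hom C A B. madd C (madd C f g) h = madd C f (madd C g h))))"
  using acd[THEN conjunct2, THEN conjunct2, THEN conjunct2, THEN conjunct2, THEN conjunct2] by (rule conjunct1)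
lemma p7: "\<forall>A B D f g h. f \<in> hom C A B \<longrightarrow> g \<in> hom C A B \<longrightarrow> h \<in> hom C B D \<longrightarrow>
        cmp C h (madd C f g) = madd C (cmp C h f) (cmp C h g)"
  using acd[THEN conjunct2, THEN conjunct2, THEN conjunct2, THEN conjunct2, THEN conjunct2, THEN conjunct2] by (rule conjunct1)
lemma p8: "\<forall>A B D f g k. f \<in> hom C B D \<longrightarrow> g \<in> hom C B D \<longrightarrow> k \<in> hom C A B \<longrightarrow>
        cmp C (madd C f g) k = madd C (cmp C f k) (cmp C g k)"
  using acd[THEN conjunct2, THEN conjunct2, THEN conjunct2, THEN conjunct2, THEN conjunct2, THEN conjunct2, THEN conjunct2] by (rule conjunct1)

lemma Mor_src[simp]: "f \<in> Mor C \<Longrightarrow> src C f \<in> Ob C"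
  using p1 by blast
lemma Mor_tgt[simp]: "f \<in> Mor C \<Longrightarrow> tgt C f \<in> Ob C"
  using p1 by blast

lemma cmp_hom: "f \<in> hom C A B \<Longrightarrow> g \<in> hom C B D \<Longrightarrow> cmp C g f \<in> hom C A D"
  using p3 by blast

lemma cmp_Mor0: assumes "f \<in> Mor C" "g \<in> Mor C" "tgt C f = src C g"
  shows "cmp C g f \<in> Mor C \<and> src C (cmp C g f) = src C f \<and> tgt C (cmp C g f) = tgt C g"
proof -
  have "f \<in> hom C (src C f) (tgt C f)" "g \<in> hom C (tgt C f) (tgt C g)"
    using assms unfolding hom_def by auto
  from cmp_hom[OF this] show ?thesis unfolding hom_def by blast
qed
lemma cmp_Mor[simp]: "f \<in> Mor C \<Longrightarrow> g \<in> Mor C \<Longrightarrow> tgt C f = src C g \<Longrightarrow> cmp C g f \<in> Mor C"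
  and cmp_src[simp]: "f \<in> Mor C \<Longrightarrow> g \<in> Mor C \<Longrightarrow> tgt C f = src C g \<Longrightarrow> src C (cmp C g f) = src C f"
  and cmp_tgt[simp]: "f \<in> Mor C \<Longrightarrow> g \<in> Mor C \<Longrightarrow> tgt C f = src C g \<Longrightarrow> tgt C (cmp C g f) = tgt C g"
  using cmp_Mor0 by blast+

lemma assoc: "f \<in> Mor C \<Longrightarrow> g \<in> Mor C \<Longrightarrow> h \<in> Mor C \<Longrightarrow> tgt C f = src C g \<Longrightarrow> tgt C g = src C h \<Longrightarrow>
   cmp C h (cmp C g f) = cmp C (cmp C h g) f"
  using p4 by blast

lemma id_Mor[simp]: "A \<in> Ob C \<Longrightarrow> idm C A \<in> Mor C"
  and id_src[simp]: "A \<in> Ob C \<Longrightarrow> src C (idm C A) = A"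
  and id_tgt[simp]: "A \<in> Ob C \<Longrightarrow> tgt C (idm C A) = A"
  using p2 unfolding hom_def by blast+

lemma id_l[simp]: "f \<in> Mor C \<Longrightarrow> tgt C f = B \<Longrightarrow> cmp C (idm C B) f = f"
  using p5 by blast
lemma id_r[simp]: "f \<in> Mor C \<Longrightarrow> src C f = A \<Longrightarrow> cmp C f (idm C A) = f"
  using p5 by blast

lemma z_Mor[simp]: "A \<in> Ob C \<Longrightarrow> B \<in> Ob C \<Longrightarrow> mzero C A B \<in> Mor C"
  and z_src[simp]: "A \<in> Ob C \<Longrightarrow> B \<in> Ob C \<Longrightarrow> src C (mzero C A B) = A"
  and z_tgt[simp]: "A \<in> Ob C \<Longrightarrow> B \<in> Ob C \<Longrightarrow> tgt C (mzero C A B) = B"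
  using p6 unfolding hom_def by blast+

lemma grp: "f \<in> Mor C \<Longrightarrow> src C f = A \<Longrightarrow> tgt C f = B \<Longrightarrow>
   mneg C f \<in> hom C A B \<and> madd C f (mzero C A B) = f \<and> madd C f (mneg C f) = mzero C A B \<and>
          (\<forall>g\<in>hom C A B. madd C f g \<in> hom C A B \<and> madd C f g = madd C g f \<and>
             (\<forall>h\<in>hom C A B. madd C (madd C f g) h = madd C f (madd C g h)))"
proof -
  assume a: "f \<in> Mor C" "src C f = A" "tgt C f = B"
  hence "A \<in> Ob C" "B \<in> Ob C" by auto
  moreover have "f \<in> hom C A B" using a unfolding hom_def by auto
  ultimately show ?thesis using p6 by blast
qed

lemma neg_Mor[simp]: "f \<in> Mor C \<Longrightarrow> mneg C f \<in> Mor C"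
  and neg_src[simp]: "f \<in> Mor C \<Longrightarrow> src C (mneg C f) = src C f"
  and neg_tgt[simp]: "f \<in> Mor C \<Longrightarrow> tgt C (mneg C f) = tgt C f"
proof -
  assume a: "f \<in> Mor C"
  have "mneg C f \<in> hom C (src C f) (tgt C f)" using grp[of f "src C f" "tgt C f"] a by blast
  thus "mneg C f \<in> Mor C" unfolding hom_def by auto
next
  assume a: "f \<in> Mor C"
  have "mneg C f \<in> hom C (src C f) (tgt C f)" using grp[of f "src C f" "tgt C f"] a by blast
  thus "src C (mneg C f) = src C f" unfolding hom_def by auto
next
  assume a: "f \<in> Mor C"
  have "mneg C f \<in> hom C (src C f) (tgt C f)" using grp[of f "src C f" "tgt C f"] a by blast
  thus "tgt C (mneg C f) = tgt C f" unfolding hom_def by auto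
qed

lemma add_hom: "f \<in> Mor C \<Longrightarrow> g \<in> Mor C \<Longrightarrow> src C g = src C f \<Longrightarrow> tgt C g = tgt C f \<Longrightarrow>
   madd C f g \<in> hom C (src C f) (tgt C f)"
proof -
  assume a: "f \<in> Mor C" "g \<in> Mor C" "src C g = src C f" "tgt C g = tgt C f"
  hence "g \<in> hom C (src C f) (tgt C f)" unfolding hom_def by auto
  thus ?thesis using grp[of f "src C f" "tgt C f"] a by blast
qed
lemma add_Mor[simp]: "f \<in> Mor C \<Longrightarrow> g \<in> Mor C \<Longrightarrow> src C g = src C f \<Longrightarrow> tgt C g = tgt C f \<Longrightarrow>
   madd C f g \<in> Mor C"
  and add_src[simp]: "f \<in> Mor C \<Longrightarrow> g \<in> Mor C \<Longrightarrow> src C g = src C f \<Longrightarrow> tgt C g = tgt C f \<Longrightarrow>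
   src C (madd C f g) = src C f"
  and add_tgt[simp]: "f \<in> Mor C \<Longrightarrow> g \<in> Mor C \<Longrightarrow> src C g = src C f \<Longrightarrow> tgt C g = tgt C f \<Longrightarrow>
   tgt C (madd C f g) = tgt C f"
  using add_hom[of f g] unfolding hom_def by auto

lemma add_z[simp]: "f \<in> Mor C \<Longrightarrow> src C f = A \<Longrightarrow> tgt C f = B \<Longrightarrow> madd C f (mzero C A B) = f"
  using grp by blast
lemma add_neg: "f \<in> Mor C \<Longrightarrow> src C f = A \<Longrightarrow> tgt C f = B \<Longrightarrow> madd C f (mneg C f) = mzero C A B"
  using grp by blast
lemma add_comm: "f \<in> Mor C \<Longrightarrow> g \<in> Mor C \<Longrightarrow> src C g = src C f \<Longrightarrow> tgt C g = tgt C f \<Longrightarrow>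
   madd C f g = madd C g f"
proof -
  assume a: "f \<in> Mor C" "g \<in> Mor C" "src C g = src C f" "tgt C g = tgt C f"
  hence "g \<in> hom C (src C f) (tgt C f)" unfolding hom_def by auto
  thus ?thesis using grp[of f "src C f" "tgt C f"] a by blast
qed
lemma add_assoc: "f \<in> Mor C \<Longrightarrow> g \<in> Mor C \<Longrightarrow> h \<in> Mor C \<Longrightarrow> src C g = src C f \<Longrightarrow> tgt C g = tgt C f \<Longrightarrow>
   src C h = src C f \<Longrightarrow> tgt C h = tgt C f \<Longrightarrow>
   madd C (madd C f g) h = madd C f (madd C g h)"
proof -
  assume a: "f \<in> Mor C" "g \<in> Mor C" "h \<in> Mor C" "src C g = src C f" "tgt C g = tgt C f"
   "src C h = src C f" "tgt C h = tgt C f"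
  hence "g \<in> hom C (src C f) (tgt C f)" "h \<in> hom C (src C f) (tgt C f)" unfolding hom_def by auto
  thus ?thesis using grp[of f "src C f" "tgt C f"] a by blast
qed

lemma z_add[simp]: "f \<in> Mor C \<Longrightarrow> src C f = A \<Longrightarrow> tgt C f = B \<Longrightarrow> madd C (mzero C A B) f = f"
  by (subst add_comm) auto

lemma neg_add: "f \<in> Mor C \<Longrightarrow> src C f = A \<Longrightarrow> tgt C f = B \<Longrightarrow> madd C (mneg C f) f = mzero C A B"
  by (subst add_comm) (auto simp: add_neg)

lemma idem_z: assumes "a \<in> Mor C" "madd C a a = a" shows "a = mzero C (src C a) (tgt C a)"
proof -
  have "mzero C (src C a) (tgt C a) = madd C a (mneg C a)" using add_neg assms by auto
  also have "\<dots> = madd C (madd C a a) (mneg C a)" using assms by simp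
  also have "\<dots> = madd C a (madd C a (mneg C a))" by (rule add_assoc) (use assms in auto)
  also have "\<dots> = a" using assms by (simp add: add_neg)
  finally show ?thesis by simp
qed

lemma neg_unique: assumes "a \<in> Mor C" "b \<in> Mor C" "src C b = src C a" "tgt C b = tgt C a"
  "madd C a b = mzero C (src C a) (tgt C a)" shows "b = mneg C a"
proof -
  have "b = madd C b (madd C a (mneg C a))" using assms by (simp add: add_neg)
  also have "\<dots> = madd C (madd C b a) (mneg C a)" by (rule add_assoc[symmetric]) (use assms in auto)
  also have "madd C b a = madd C a b" by (rule add_comm) (use assms in auto)
  also have "madd C (madd C a b) (mneg C a) = mneg C a" using assms by simp
  finally show ?thesis .
qed

lemma neg_z[simp]: "A \<in> Ob C \<Longrightarrow> B \<in> Ob C \<Longrightarrow> mneg C (mzero C A B) = mzero C A B"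
  by (rule neg_unique[symmetric]) auto

lemma bil_l: "f \<in> Mor C \<Longrightarrow> g \<in> Mor C \<Longrightarrow> h \<in> Mor C \<Longrightarrow> src C g = src C f \<Longrightarrow> tgt C g = tgt C f \<Longrightarrow>
  tgt C f = src C h \<Longrightarrow> cmp C h (madd C f g) = madd C (cmp C h f) (cmp C h g)"
proof -
  assume a: "f \<in> Mor C" "g \<in> Mor C" "h \<in> Mor C" "src C g = src C f" "tgt C g = tgt C f" "tgt C f = src C h"
  hence "f \<in> hom C (src C f) (tgt C f)" "g \<in> hom C (src C f) (tgt C f)" "h \<in> hom C (tgt C f) (tgt C h)"
    unfolding hom_def by auto
  thus ?thesis using p7 by blast
qed
lemma bil_r: "f \<in> Mor C \<Longrightarrow> g \<in> Mor C \<Longrightarrow> k \<in> Mor C \<Longrightarrow> src C g = src C f \<Longrightarrow> tgt C g = tgt C f \<Longrightarrow>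
  tgt C k = src C f \<Longrightarrow> cmp C (madd C f g) k = madd C (cmp C f k) (cmp C g k)"
proof -
  assume a: "f \<in> Mor C" "g \<in> Mor C" "k \<in> Mor C" "src C g = src C f" "tgt C g = tgt C f" "tgt C k = src C f"
  hence "f \<in> hom C (src C f) (tgt C f)" "g \<in> hom C (src C f) (tgt C f)" "k \<in> hom C (src C k) (src C f)"
    unfolding hom_def by auto
  thus ?thesis using p8 by blast
qed

lemma cz_r[simp]: assumes "h \<in> Mor C" "A \<in> Ob C" "src C h = B"
  shows "cmp C h (mzero C A B) = mzero C A (tgt C h)"
proof -
  have B: "B \<in> Ob C" using assms by auto
  let ?a = "cmp C h (mzero C A B)"
  have "madd C ?a ?a = cmp C h (madd C (mzero C A B) (mzero C A B))"
    by (rule bil_l[symmetric]) (use assms B in auto)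
  also have "madd C (mzero C A B) (mzero C A B) = mzero C A B" using B assms by simp
  finally have "madd C ?a ?a = ?a" .
  hence "?a = mzero C (src C ?a) (tgt C ?a)" by (intro idem_z) (use assms B in auto)
  moreover have "src C ?a = A" "tgt C ?a = tgt C h" using assms B by auto
  ultimately show ?thesis by metis
qed

lemma cz_l[simp]: assumes "f \<in> Mor C" "D \<in> Ob C" "tgt C f = B"
  shows "cmp C (mzero C B D) f = mzero C (src C f) D"
proof -
  have B: "B \<in> Ob C" using assms by auto
  let ?a = "cmp C (mzero C B D) f"
  have "madd C ?a ?a = cmp C (madd C (mzero C B D) (mzero C B D)) f"
    by (rule bil_r[symmetric]) (use assms B in auto)
  also have "madd C (mzero C B D) (mzero C B D) = mzero C B D" using B assms by simp
  finally have "madd C ?a ?a = ?a" .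
  hence "?a = mzero C (src C ?a) (tgt C ?a)" by (intro idem_z) (use assms B in auto)
  moreover have "src C ?a = src C f" "tgt C ?a = D" using assms B by auto
  ultimately show ?thesis by metis
qed

lemma cneg_r: assumes "h \<in> Mor C" "a \<in> Mor C" "tgt C a = src C h"
  shows "cmp C h (mneg C a) = mneg C (cmp C h a)"
proof (rule neg_unique)
  have "madd C (cmp C h a) (cmp C h (mneg C a)) = cmp C h (madd C a (mneg C a))"
    by (rule bil_l[symmetric]) (use assms in auto)
  also have "madd C a (mneg C a) = mzero C (src C a) (tgt C a)" using assms by (simp add: add_neg)
  also have "cmp C h (mzero C (src C a) (tgt C a)) = mzero C (src C a) (tgt C h)" using assms by simp
  finally show "madd C (cmp C h a) (cmp C h (mneg C a)) = mzero C (src C (cmp C h a)) (tgt C (cmp C h a))"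
    using assms by simp
qed (use assms in auto)

lemma cneg_l: assumes "h \<in> Mor C" "a \<in> Mor C" "tgt C h = src C a"
  shows "cmp C (mneg C a) h = mneg C (cmp C a h)"
proof (rule neg_unique)
  have "madd C (cmp C a h) (cmp C (mneg C a) h) = cmp C (madd C a (mneg C a)) h"
    by (rule bil_r[symmetric]) (use assms in auto)
  also have "madd C a (mneg C a) = mzero C (src C a) (tgt C a)" using assms by (simp add: add_neg)
  also have "cmp C (mzero C (src C a) (tgt C a)) h = mzero C (src C h) (tgt C a)" using assms by simp
  finally show "madd C (cmp C a h) (cmp C (mneg C a) h) = mzero C (src C (cmp C a h)) (tgt C (cmp C a h))"
    using assms by simp
qed (use assms in auto)

end


context dex
begin

lemma ex1_eq: "\<exists>!x. P x \<Longrightarrow> P a \<Longrightarrow> P b \<Longrightarrow> a = b" by blast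

lemma conf_kc: "(k, d) \<in> Cf \<Longrightarrow> kc_pair C k d"
  using cc unfolding conflation_category_def by blast

lemma conf_basic: assumes "(k, d) \<in> Cf"
  shows "k \<in> Mor C" "d \<in> Mor C" "tgt C k = src C d" "cmp C d k = mzero C (src C k) (tgt C d)"
  using conf_kc[OF assms] unfolding kc_pair_def is_kernel_def by auto

lemma conf_ker: "(k, d) \<in> Cf \<Longrightarrow> is_kernel C k d"
  using conf_kc unfolding kc_pair_def by blast
lemma conf_coker: "(k, d) \<in> Cf \<Longrightarrow> is_cokernel C d k"
  using conf_kc unfolding kc_pair_def by blast

lemma ker_basic: "is_kernel C k d \<Longrightarrow> k \<in> Mor C \<and> d \<in> Mor C \<and> tgt C k = src C d \<and>
   cmp C d k = mzero C (src C k) (tgt C d)"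
  unfolding is_kernel_def by blast

lemma coker_basic: "is_cokernel C d k \<Longrightarrow> k \<in> Mor C \<and> d \<in> Mor C \<and> tgt C k = src C d \<and>
   cmp C d k = mzero C (src C k) (tgt C d)"
  unfolding is_cokernel_def by blast

lemma ker_ex1: assumes "is_kernel C k d" "h \<in> Mor C" "tgt C h = src C d"
  "cmp C d h = mzero C (src C h) (tgt C d)"
  shows "\<exists>!u. u \<in> hom C (src C h) (src C k) \<and> cmp C k u = h"
proof -
  have F: "src C h \<in> Ob C" "h \<in> hom C (src C h) (src C d)" using assms(2,3) unfolding hom_def by auto
  have H: "\<forall>T\<in>Ob C. \<forall>h\<in>hom C T (src C d). cmp C d h = mzero C T (tgt C d) \<longrightarrow>
        (\<exists>!u. u \<in> hom C T (src C k) \<and> cmp C k u = h)" using assms(1) unfolding is_kernel_def by (elim conjE) assumption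
  show ?thesis by (rule H[rule_format, OF F assms(4)])
qed

lemma ker_ex: assumes "is_kernel C k d" "h \<in> Mor C" "tgt C h = src C d"
  "cmp C d h = mzero C (src C h) (tgt C d)"
  obtains u where "u \<in> Mor C" "src C u = src C h" "tgt C u = src C k" "cmp C k u = h"
proof -
  obtain u where "u \<in> hom C (src C h) (src C k)" "cmp C k u = h" using ex1_implies_ex[OF ker_ex1[OF assms]] by blast
  thus ?thesis using that unfolding hom_def by blast
qed

lemma ker_mono: assumes "is_kernel C k d" "u1 \<in> Mor C" "u2 \<in> Mor C" "src C u2 = src C u1"
  "tgt C u1 = src C k" "tgt C u2 = src C k" "cmp C k u1 = cmp C k u2"
  shows "u1 = u2"
proof -
  have kb: "k \<in> Mor C" "d \<in> Mor C" "tgt C k = src C d" "cmp C d k = mzero C (src C k) (tgt C d)"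
    using ker_basic[OF assms(1)] by auto
  let ?h = "cmp C k u1"
  have hM: "?h \<in> Mor C" "src C ?h = src C u1" "tgt C ?h = src C d" using assms(2,5) kb(1,3) by auto
  have e1: "cmp C d ?h = cmp C (cmp C d k) u1" by (rule assoc) (use assms(2,5) kb(1,2,3) in auto)
  have e2: "cmp C (cmp C d k) u1 = mzero C (src C u1) (tgt C d)"
    unfolding kb(4) using assms(2,5) kb(2) by (intro cz_l) auto
  have ex: "\<exists>!u. u \<in> hom C (src C ?h) (src C k) \<and> cmp C k u = ?h"
    apply (rule ker_ex1[OF assms(1) hM(1) hM(3)])
    unfolding hM(2) e1 e2 by (rule refl)
  have "u1 \<in> hom C (src C ?h) (src C k) \<and> cmp C k u1 = ?h" "u2 \<in> hom C (src C ?h) (src C k) \<and> cmp C k u2 = ?h"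
    unfolding hom_def hM(2) using assms(2-7) by auto
  thus ?thesis by (rule ex1_eq[OF ex])
qed

lemma coker_ex1: assumes "is_cokernel C d k" "h \<in> Mor C" "src C h = tgt C k"
  "cmp C h k = mzero C (src C k) (tgt C h)"
  shows "\<exists>!u. u \<in> hom C (tgt C d) (tgt C h) \<and> cmp C u d = h"
proof -
  have F: "tgt C h \<in> Ob C" "h \<in> hom C (tgt C k) (tgt C h)" using assms(2,3) unfolding hom_def by auto
  have H: "\<forall>T\<in>Ob C. \<forall>h\<in>hom C (tgt C k) T. cmp C h k = mzero C (src C k) T \<longrightarrow>
        (\<exists>!u. u \<in> hom C (tgt C d) T \<and> cmp C u d = h)" using assms(1) unfolding is_cokernel_def by (elim conjE) assumption
  show ?thesis by (rule H[rule_format, OF F assms(4)])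
qed

lemma coker_ex: assumes "is_cokernel C d k" "h \<in> Mor C" "src C h = tgt C k"
  "cmp C h k = mzero C (src C k) (tgt C h)"
  obtains u where "u \<in> Mor C" "src C u = tgt C d" "tgt C u = tgt C h" "cmp C u d = h"
proof -
  obtain u where "u \<in> hom C (tgt C d) (tgt C h)" "cmp C u d = h" using ex1_implies_ex[OF coker_ex1[OF assms]] by blast
  thus ?thesis using that unfolding hom_def by blast
qed

lemma coker_epi: assumes "is_cokernel C d k" "u1 \<in> Mor C" "u2 \<in> Mor C" "tgt C u2 = tgt C u1"
  "src C u1 = tgt C d" "src C u2 = tgt C d" "cmp C u1 d = cmp C u2 d"
  shows "u1 = u2"
proof -
  have kb: "k \<in> Mor C" "d \<in> Mor C" "tgt C k = src C d" "cmp C d k = mzero C (src C k) (tgt C d)"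
    using coker_basic[OF assms(1)] by auto
  let ?h = "cmp C u1 d"
  have hM: "?h \<in> Mor C" "tgt C ?h = tgt C u1" "src C ?h = tgt C k" using assms(2,5) kb(2,3) by auto
  have e1: "cmp C ?h k = cmp C u1 (cmp C d k)" by (rule assoc[symmetric]) (use assms(2,5) kb(1,2,3) in auto)
  have e2: "cmp C u1 (cmp C d k) = mzero C (src C k) (tgt C u1)"
    unfolding kb(4) using assms(2,5) kb(1,2) by (intro cz_r) auto
  have ex: "\<exists>!u. u \<in> hom C (tgt C d) (tgt C ?h) \<and> cmp C u d = ?h"
    apply (rule coker_ex1[OF assms(1) hM(1) hM(3)])
    unfolding hM(2) e1 e2 by (rule refl)
  have "u1 \<in> hom C (tgt C d) (tgt C ?h) \<and> cmp C u1 d = ?h" "u2 \<in> hom C (tgt C d) (tgt C ?h) \<and> cmp C u2 d = ?h"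
    unfolding hom_def hM(2) using assms(2-7) by auto
  thus ?thesis by (rule ex1_eq[OF ex])
qed

lemma pb_basic: assumes "is_pullback C f g q1 q2"
  shows "f \<in> Mor C" "g \<in> Mor C" "tgt C f = tgt C g" "q1 \<in> Mor C" "q2 \<in> Mor C"
    "src C q2 = src C q1" "tgt C q1 = src C f" "tgt C q2 = src C g" "cmp C f q1 = cmp C g q2"
proof -
  have "f \<in> Mor C \<and> g \<in> Mor C \<and> tgt C f = tgt C g \<and>
     q1 \<in> hom C (src C q1) (src C f) \<and> q2 \<in> hom C (src C q1) (src C g) \<and>
     cmp C f q1 = cmp C g q2" using assms unfolding is_pullback_def by (elim conjE) (intro conjI)
  thus "f \<in> Mor C" "g \<in> Mor C" "tgt C f = tgt C g" "q1 \<in> Mor C" "q2 \<in> Mor C"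
    "src C q2 = src C q1" "tgt C q1 = src C f" "tgt C q2 = src C g" "cmp C f q1 = cmp C g q2"
    unfolding hom_def by auto
qed

lemma pb_ex1: assumes "is_pullback C f g q1 q2" "u \<in> Mor C" "v \<in> Mor C" "src C v = src C u"
  "tgt C u = src C f" "tgt C v = src C g" "cmp C f u = cmp C g v"
  shows "\<exists>!w. w \<in> hom C (src C u) (src C q1) \<and> cmp C q1 w = u \<and> cmp C q2 w = v"
proof -
  have F: "src C u \<in> Ob C" "u \<in> hom C (src C u) (src C f)" "v \<in> hom C (src C u) (src C g)"
    using assms(2-6) unfolding hom_def by auto
  have H: "\<forall>T\<in>Ob C. \<forall>u\<in>hom C T (src C f). \<forall>v\<in>hom C T (src C g). cmp C f u = cmp C g v \<longrightarrow>
        (\<exists>!w. w \<in> hom C T (src C q1) \<and> cmp C q1 w = u \<and> cmp C q2 w = v)" using assms(1) unfolding is_pullback_def by (elim conjE) assumption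
  show ?thesis by (rule H[rule_format, OF F assms(7)])
qed

lemma pb_ex: assumes "is_pullback C f g q1 q2" "u \<in> Mor C" "v \<in> Mor C" "src C v = src C u"
  "tgt C u = src C f" "tgt C v = src C g" "cmp C f u = cmp C g v"
  obtains w where "w \<in> Mor C" "src C w = src C u" "tgt C w = src C q1" "cmp C q1 w = u" "cmp C q2 w = v"
proof -
  obtain w where "w \<in> hom C (src C u) (src C q1)" "cmp C q1 w = u" "cmp C q2 w = v" using ex1_implies_ex[OF pb_ex1[OF assms]] by blast
  thus ?thesis using that unfolding hom_def by blast
qed

lemma pb_uniq: assumes "is_pullback C f g q1 q2" "w1 \<in> Mor C" "w2 \<in> Mor C" "src C w2 = src C w1"
  "tgt C w1 = src C q1" "tgt C w2 = src C q1" "cmp C q1 w1 = cmp C q1 w2" "cmp C q2 w1 = cmp C q2 w2"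
  shows "w1 = w2"
proof -
  note b = pb_basic[OF assms(1)]
  have "\<exists>!w. w \<in> hom C (src C (cmp C q1 w1)) (src C q1) \<and> cmp C q1 w = cmp C q1 w1 \<and> cmp C q2 w = cmp C q2 w1"
  proof (rule pb_ex1)
    have "cmp C f (cmp C q1 w1) = cmp C (cmp C f q1) w1" by (rule assoc) (use assms(1-6) b in auto)
    also have "\<dots> = cmp C (cmp C g q2) w1" using b by simp
    also have "\<dots> = cmp C g (cmp C q2 w1)" by (rule assoc[symmetric]) (use assms(1-6) b in auto)
    finally show "cmp C f (cmp C q1 w1) = cmp C g (cmp C q2 w1)" .
  qed (use assms(1-6) b in auto)
  moreover have "w1 \<in> hom C (src C (cmp C q1 w1)) (src C q1) \<and> cmp C q1 w1 = cmp C q1 w1 \<and> cmp C q2 w1 = cmp C q2 w1"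
     "w2 \<in> hom C (src C (cmp C q1 w1)) (src C q1) \<and> cmp C q1 w2 = cmp C q1 w1 \<and> cmp C q2 w2 = cmp C q2 w1"
    using assms(1-8) b unfolding hom_def by auto
  ultimately show ?thesis by (rule ex1_eq)
qed

lemma po_basic: assumes "is_pushout C a b r1 r2"
  shows "a \<in> Mor C" "b \<in> Mor C" "src C a = src C b" "r1 \<in> Mor C" "r2 \<in> Mor C"
    "tgt C r2 = tgt C r1" "src C r1 = tgt C a" "src C r2 = tgt C b" "cmp C r1 a = cmp C r2 b"
proof -
  have "a \<in> Mor C \<and> b \<in> Mor C \<and> src C a = src C b \<and>
     r1 \<in> hom C (tgt C a) (tgt C r1) \<and> r2 \<in> hom C (tgt C b) (tgt C r1) \<and>
     cmp C r1 a = cmp C r2 b" using assms unfolding is_pushout_def by (elim conjE) (intro conjI)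
  thus "a \<in> Mor C" "b \<in> Mor C" "src C a = src C b" "r1 \<in> Mor C" "r2 \<in> Mor C"
    "tgt C r2 = tgt C r1" "src C r1 = tgt C a" "src C r2 = tgt C b" "cmp C r1 a = cmp C r2 b"
    unfolding hom_def by auto
qed

lemma po_ex1: assumes "is_pushout C a b r1 r2" "u \<in> Mor C" "v \<in> Mor C" "tgt C v = tgt C u"
  "src C u = tgt C a" "src C v = tgt C b" "cmp C u a = cmp C v b"
  shows "\<exists>!w. w \<in> hom C (tgt C r1) (tgt C u) \<and> cmp C w r1 = u \<and> cmp C w r2 = v"
proof -
  have F: "tgt C u \<in> Ob C" "u \<in> hom C (tgt C a) (tgt C u)" "v \<in> hom C (tgt C b) (tgt C u)"
    using assms(2-6) unfolding hom_def by auto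
  have H: "\<forall>T\<in>Ob C. \<forall>u\<in>hom C (tgt C a) T. \<forall>v\<in>hom C (tgt C b) T. cmp C u a = cmp C v b \<longrightarrow>
        (\<exists>!w. w \<in> hom C (tgt C r1) T \<and> cmp C w r1 = u \<and> cmp C w r2 = v)" using assms(1) unfolding is_pushout_def by (elim conjE) assumption
  show ?thesis by (rule H[rule_format, OF F assms(7)])
qed

lemma po_ex: assumes "is_pushout C a b r1 r2" "u \<in> Mor C" "v \<in> Mor C" "tgt C v = tgt C u"
  "src C u = tgt C a" "src C v = tgt C b" "cmp C u a = cmp C v b"
  obtains w where "w \<in> Mor C" "src C w = tgt C r1" "tgt C w = tgt C u" "cmp C w r1 = u" "cmp C w r2 = v"
proof -
  obtain w where "w \<in> hom C (tgt C r1) (tgt C u)" "cmp C w r1 = u" "cmp C w r2 = v" using ex1_implies_ex[OF po_ex1[OF assms]] by blast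
  thus ?thesis using that unfolding hom_def by blast
qed

lemma po_uniq: assumes "is_pushout C a b r1 r2" "w1 \<in> Mor C" "w2 \<in> Mor C" "tgt C w2 = tgt C w1"
  "src C w1 = tgt C r1" "src C w2 = tgt C r1" "cmp C w1 r1 = cmp C w2 r1" "cmp C w1 r2 = cmp C w2 r2"
  shows "w1 = w2"
proof -
  note b = po_basic[OF assms(1)]
  have "\<exists>!w. w \<in> hom C (tgt C r1) (tgt C (cmp C w1 r1)) \<and> cmp C w r1 = cmp C w1 r1 \<and> cmp C w r2 = cmp C w1 r2"
  proof (rule po_ex1)
    have "cmp C (cmp C w1 r1) a = cmp C w1 (cmp C r1 a)" by (rule assoc[symmetric]) (use assms(1-6) b in auto)
    also have "\<dots> = cmp C w1 (cmp C r2 b)" using b by simp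
    also have "\<dots> = cmp C (cmp C w1 r2) b" by (rule assoc) (use assms(1-6) b in auto)
    finally show "cmp C (cmp C w1 r1) a = cmp C (cmp C w1 r2) b" .
  qed (use assms(1-6) b in auto)
  moreover have "w1 \<in> hom C (tgt C r1) (tgt C (cmp C w1 r1)) \<and> cmp C w1 r1 = cmp C w1 r1 \<and> cmp C w1 r2 = cmp C w1 r2"
    "w2 \<in> hom C (tgt C r1) (tgt C (cmp C w1 r1)) \<and> cmp C w2 r1 = cmp C w1 r1 \<and> cmp C w2 r2 = cmp C w1 r2"
    using assms(1-8) b unfolding hom_def by auto
  ultimately show ?thesis by (rule ex1_eq)
qed

end


context dex
begin

lemma conf_iso: assumes "(f, g) \<in> Cf" "f' \<in> Mor C" "g' \<in> Mor C" "tgt C f' = src C g'"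
  "iso C a" "iso C b" "iso C c" "src C a = src C f" "tgt C a = src C f'"
  "src C b = tgt C f" "tgt C b = tgt C f'" "src C c = tgt C g" "tgt C c = tgt C g'"
  "cmp C b f = cmp C f' a" "cmp C c g = cmp C g' b"
  shows "(f', g') \<in> Cf"
proof -
  have H: "\<forall>f g f' g' a b c. (f, g) \<in> Cf \<longrightarrow> f' \<in> Mor C \<longrightarrow> g' \<in> Mor C \<longrightarrow>
        tgt C f' = src C g' \<longrightarrow> iso C a \<longrightarrow> iso C b \<longrightarrow> iso C c \<longrightarrow>
        src C a = src C f \<longrightarrow> tgt C a = src C f' \<longrightarrow>
        src C b = tgt C f \<longrightarrow> tgt C b = tgt C f' \<longrightarrow>
        src C c = tgt C g \<longrightarrow> tgt C c = tgt C g' \<longrightarrow>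
        cmp C b f = cmp C f' a \<longrightarrow> cmp C c g = cmp C g' b \<longrightarrow> (f', g') \<in> Cf"
    using cc unfolding conflation_category_def by (elim conjE) assumption
  show ?thesis by (rule H[rule_format, OF assms])
qed

lemma iso_intro: assumes "t \<in> Mor C" "r \<in> Mor C" "src C r = tgt C t" "tgt C r = src C t"
  "cmp C r t = idm C (src C t)" "cmp C t r = idm C (tgt C t)"
  shows "iso C t"
  unfolding iso_def hom_def using assms by blast

lemma iso_id: "A \<in> Ob C \<Longrightarrow> iso C (idm C A)"
  by (rule iso_intro[of _ "idm C A"]) auto

lemma ker_conf: assumes "(k, d) \<in> Cf" "is_kernel C k2 d" shows "(k2, d) \<in> Cf"
proof -
  note kb = conf_basic[OF assms(1)]
  note kk = conf_ker[OF assms(1)]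
  have k2b: "k2 \<in> Mor C" "tgt C k2 = src C d" "cmp C d k2 = mzero C (src C k2) (tgt C d)"
    using ker_basic[OF assms(2)] by auto
  obtain a where a: "a \<in> Mor C" "src C a = src C k" "tgt C a = src C k2" "cmp C k2 a = k"
    by (rule ker_ex[OF assms(2) kb(1) kb(3) kb(4)])
  obtain a' where a': "a' \<in> Mor C" "src C a' = src C k2" "tgt C a' = src C k" "cmp C k a' = k2"
    by (rule ker_ex[OF kk k2b])
  have "cmp C a' a = idm C (src C k)"
  proof (rule ker_mono[OF kk])
    have "cmp C k (cmp C a' a) = cmp C (cmp C k a') a" by (rule assoc) (use a a' kb in auto)
    also have "\<dots> = k" using a a' by simp
    also have "\<dots> = cmp C k (idm C (src C k))" using kb by simp
    finally show "cmp C k (cmp C a' a) = cmp C k (idm C (src C k))" .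
  qed (use a a' kb in auto)
  moreover have "cmp C a a' = idm C (src C k2)"
  proof (rule ker_mono[OF assms(2)])
    have "cmp C k2 (cmp C a a') = cmp C (cmp C k2 a) a'" by (rule assoc) (use a a' k2b in auto)
    also have "\<dots> = k2" using a a' by simp
    also have "\<dots> = cmp C k2 (idm C (src C k2))" using k2b by simp
    finally show "cmp C k2 (cmp C a a') = cmp C k2 (idm C (src C k2))" .
  qed (use a a' k2b in auto)
  ultimately have ia: "iso C a" using a a' by (intro iso_intro[of a a']) auto
  show ?thesis
    by (rule conf_iso[OF assms(1) k2b(1) kb(2) k2b(2) ia iso_id iso_id, of "tgt C k" "tgt C d"])
       (use a kb k2b in auto)
qed

lemma coker_conf: assumes "(k, d) \<in> Cf" "is_cokernel C d2 k" shows "(k, d2) \<in> Cf"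
proof -
  note kb = conf_basic[OF assms(1)]
  note kk = conf_coker[OF assms(1)]
  have d2b: "d2 \<in> Mor C" "src C d2 = tgt C k" "cmp C d2 k = mzero C (src C k) (tgt C d2)"
    using coker_basic[OF assms(2)] by auto
  have kb4: "cmp C d k = mzero C (src C k) (tgt C d)" using kb by simp
  obtain c where c: "c \<in> Mor C" "src C c = tgt C d" "tgt C c = tgt C d2" "cmp C c d = d2"
    by (rule coker_ex[OF kk d2b])
  obtain c' where c': "c' \<in> Mor C" "src C c' = tgt C d2" "tgt C c' = tgt C d" "cmp C c' d2 = d"
    by (rule coker_ex[OF assms(2) kb(2)]) (use kb kb4 in auto)
  have "cmp C c' c = idm C (tgt C d)"
  proof (rule coker_epi[OF kk])
    have "cmp C (cmp C c' c) d = cmp C c' (cmp C c d)" by (rule assoc[symmetric]) (use c c' kb in auto)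
    also have "\<dots> = d" using c c' by simp
    also have "\<dots> = cmp C (idm C (tgt C d)) d" using kb by simp
    finally show "cmp C (cmp C c' c) d = cmp C (idm C (tgt C d)) d" .
  qed (use c c' kb in auto)
  moreover have "cmp C c c' = idm C (tgt C d2)"
  proof (rule coker_epi[OF assms(2)])
    have "cmp C (cmp C c c') d2 = cmp C c (cmp C c' d2)" by (rule assoc[symmetric]) (use c c' d2b in auto)
    also have "\<dots> = d2" using c c' by simp
    also have "\<dots> = cmp C (idm C (tgt C d2)) d2" using d2b by simp
    finally show "cmp C (cmp C c c') d2 = cmp C (idm C (tgt C d2)) d2" .
  qed (use c c' d2b in auto)
  ultimately have ic: "iso C c" using c c' by (intro iso_intro[of c c']) auto
  show ?thesis
    by (rule conf_iso[OF assms(1) kb(1) d2b(1) _ iso_id iso_id ic, of "src C k" "tgt C k"])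
       (use c kb d2b in auto)
qed

lemma pb_ker: assumes "is_pullback C f p q1 q2" "(k, p) \<in> Cf" "deflation Cf q1"
  obtains \<kappa> where "(\<kappa>, q1) \<in> Cf" "cmp C q2 \<kappa> = k" "src C \<kappa> = src C k"
proof -
  note pb = pb_basic[OF assms(1)]
  note kb = conf_basic[OF assms(2)]
  note kk = conf_ker[OF assms(2)]
  have e0: "cmp C f (mzero C (src C k) (src C f)) = cmp C p k"
    using pb kb by simp
  obtain \<kappa> where ka: "\<kappa> \<in> Mor C" "src C \<kappa> = src C k" "tgt C \<kappa> = src C q1"
    "cmp C q1 \<kappa> = mzero C (src C k) (src C f)" "cmp C q2 \<kappa> = k"
    by (rule pb_ex[OF assms(1) _ kb(1) _ _ _ e0]) (use pb kb in auto)
  have isk: "is_kernel C \<kappa> q1"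
    unfolding is_kernel_def
  proof (intro conjI ballI impI)
    show "\<kappa> \<in> Mor C" "q1 \<in> Mor C" "tgt C \<kappa> = src C q1" using ka pb by auto
    show "cmp C q1 \<kappa> = mzero C (src C \<kappa>) (tgt C q1)" using ka pb by simp
    fix T h assume T: "T \<in> Ob C" and h: "h \<in> hom C T (src C q1)" and h0: "cmp C q1 h = mzero C T (tgt C q1)"
    have hM: "h \<in> Mor C" "src C h = T" "tgt C h = src C q1" using h unfolding hom_def by auto
    have "cmp C p (cmp C q2 h) = cmp C (cmp C p q2) h" by (rule assoc) (use hM pb in auto)
    also have "cmp C p q2 = cmp C f q1" using pb by simp
    also have "cmp C (cmp C f q1) h = cmp C f (cmp C q1 h)" by (rule assoc[symmetric]) (use hM pb in auto)
    also have "\<dots> = mzero C T (tgt C p)" unfolding h0 using pb T by simp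
    finally have e1: "cmp C p (cmp C q2 h) = mzero C (src C (cmp C q2 h)) (tgt C p)" using hM pb by simp
    obtain s where s: "s \<in> Mor C" "src C s = T" "tgt C s = src C k" "cmp C k s = cmp C q2 h"
      by (rule ker_ex[OF kk _ _ e1]) (use hM pb in auto)
    show "\<exists>!u. u \<in> hom C T (src C \<kappa>) \<and> cmp C \<kappa> u = h"
    proof (rule ex1I[of _ s])
      have "cmp C \<kappa> s = h"
      proof (rule pb_uniq[OF assms(1)])
        have "cmp C q1 (cmp C \<kappa> s) = cmp C (cmp C q1 \<kappa>) s" by (rule assoc) (use ka s pb in auto)
        also have "\<dots> = mzero C T (src C f)" unfolding ka(4) using s pb by simp
        also have "\<dots> = cmp C q1 h" using h0 pb by simp
        finally show "cmp C q1 (cmp C \<kappa> s) = cmp C q1 h" .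
        have "cmp C q2 (cmp C \<kappa> s) = cmp C (cmp C q2 \<kappa>) s" by (rule assoc) (use ka s pb in auto)
        also have "\<dots> = cmp C q2 h" unfolding ka(5) s(4) ..
        finally show "cmp C q2 (cmp C \<kappa> s) = cmp C q2 h" .
      qed (use ka s hM pb in auto)
      thus "s \<in> hom C T (src C \<kappa>) \<and> cmp C \<kappa> s = h" using s ka unfolding hom_def by auto
      fix u assume u: "u \<in> hom C T (src C \<kappa>) \<and> cmp C \<kappa> u = h"
      hence uM: "u \<in> Mor C" "src C u = T" "tgt C u = src C k" "cmp C \<kappa> u = h" using ka unfolding hom_def by auto
      show "u = s"
      proof (rule ker_mono[OF kk])
        have "cmp C k u = cmp C (cmp C q2 \<kappa>) u" using ka by simp
        also have "\<dots> = cmp C q2 (cmp C \<kappa> u)" by (rule assoc[symmetric]) (use ka uM pb in auto)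
        also have "\<dots> = cmp C k s" using uM s by simp
        finally show "cmp C k u = cmp C k s" .
      qed (use uM s in auto)
    qed
  qed
  obtain k1 where "(k1, q1) \<in> Cf" using assms(3) unfolding deflation_def by blast
  from ker_conf[OF this isk] show ?thesis using that ka by blast
qed

end


context dex
begin

lemma r2: "deflation Cf p \<Longrightarrow> f \<in> Mor C \<Longrightarrow> tgt C f = tgt C p \<Longrightarrow>
   \<exists>q1 q2. is_pullback C f p q1 q2 \<and> deflation Cf q1"
proof -
  have H: "\<forall>p f. deflation Cf p \<longrightarrow> f \<in> Mor C \<longrightarrow> tgt C f = tgt C p \<longrightarrow>
        (\<exists>q1 q2. is_pullback C f p q1 q2 \<and> deflation Cf q1)"
    using dex unfolding deflation_exact_def by (elim conjE) assumption
  thus "deflation Cf p \<Longrightarrow> f \<in> Mor C \<Longrightarrow> tgt C f = tgt C p \<Longrightarrow>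
   \<exists>q1 q2. is_pullback C f p q1 q2 \<and> deflation Cf q1" by blast
qed

lemma five: assumes kd: "(k, d) \<in> Cf" and kd': "(k', d') \<in> Cf" and th: "\<theta> \<in> Mor C" "src C \<theta> = tgt C k"
  "tgt C \<theta> = tgt C k'" and e1: "cmp C \<theta> k = k'" and e2: "cmp C d' \<theta> = d"
  shows "iso C \<theta>"
proof -
  note kb = conf_basic[OF kd] and kb' = conf_basic[OF kd']
  define A where "A = src C k"
  define B where "B = tgt C k"
  define B' where "B' = tgt C k'"
  define Z where "Z = tgt C d"
  have tk: "k \<in> Mor C" "src C k = A" "tgt C k = B" using kb A_def B_def by auto
  have td: "d \<in> Mor C" "src C d = B" "tgt C d = Z" using kb B_def Z_def by auto
  have sk': "src C k' = A" using e1 th tk by (metis cmp_src)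
  have tk': "k' \<in> Mor C" "src C k' = A" "tgt C k' = B'" using kb' sk' B'_def by auto
  have tgd': "tgt C d' = Z" using e2 th kb' td by (metis B'_def cmp_tgt)
  have td': "d' \<in> Mor C" "src C d' = B'" "tgt C d' = Z" using kb' tgd' B'_def by auto
  have tth: "\<theta> \<in> Mor C" "src C \<theta> = B" "tgt C \<theta> = B'" using th B_def B'_def by auto
  have obs: "A \<in> Ob C" "B \<in> Ob C" "B' \<in> Ob C" "Z \<in> Ob C" using tk tk' td by (metis Mor_src Mor_tgt)+
  have z1: "cmp C d k = mzero C A Z" and z2: "cmp C d' k' = mzero C A Z"
    using kb kb' tk td tk' td' by auto
  note ty0 = tk td tk' td' tth obs
  have "deflation Cf d" using kd unfolding deflation_def by blast
  then obtain r1 r2 where pb: "is_pullback C d' d r1 r2" and dr1: "deflation Cf r1"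
    using r2[of d d'] td' td by auto
  note pbb = pb_basic[OF pb]
  define R where "R = src C r1"
  have tr1: "r1 \<in> Mor C" "src C r1 = R" "tgt C r1 = B'" using pbb R_def td' by auto
  have tr2: "r2 \<in> Mor C" "src C r2 = R" "tgt C r2 = B" using pbb R_def td by auto
  have obR: "R \<in> Ob C" using tr1 by (metis Mor_src)
  have er: "cmp C d' r1 = cmp C d r2" using pbb by simp
  obtain \<kappa> where kr1: "(\<kappa>, r1) \<in> Cf" and ek: "cmp C r2 \<kappa> = k" and sk: "src C \<kappa> = src C k"
    by (rule pb_ker[OF pb kd dr1])
  note kapb = conf_basic[OF kr1]
  have tka: "\<kappa> \<in> Mor C" "src C \<kappa> = A" "tgt C \<kappa> = R" using kapb sk tr1 tk by auto
  have ek0: "cmp C r1 \<kappa> = mzero C A B'" using kapb tka tr1 by simp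
  note ty1 = ty0 tr1 tr2 obR tka
  obtain \<sigma> where ts: "\<sigma> \<in> Mor C" "src C \<sigma> = B" "tgt C \<sigma> = R" and es1: "cmp C r1 \<sigma> = \<theta>"
      and es2: "cmp C r2 \<sigma> = idm C B"
    by (rule pb_ex[OF pb th(1), of "idm C B"]) (use ty1 e2 in auto)
  define \<delta> where "\<delta> = madd C (cmp C \<theta> r2) (mneg C r1)"
  have tde: "\<delta> \<in> Mor C" "src C \<delta> = R" "tgt C \<delta> = B'" unfolding \<delta>_def using ty1 by auto
  note ty2 = ty1 ts tde
  have "cmp C d' \<delta> = madd C (cmp C d' (cmp C \<theta> r2)) (cmp C d' (mneg C r1))"
    unfolding \<delta>_def by (rule bil_l) (use ty1 in auto)
  also have "cmp C d' (cmp C \<theta> r2) = cmp C d r2" unfolding e2[symmetric] by (rule assoc) (use ty1 in auto)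
  also have "cmp C d' (mneg C r1) = mneg C (cmp C d r2)" unfolding er[symmetric] by (rule cneg_r) (use ty1 in auto)
  also have "madd C (cmp C d r2) (mneg C (cmp C d r2)) = mzero C R Z" by (rule add_neg) (use ty1 in auto)
  finally have dd: "cmp C d' \<delta> = mzero C (src C \<delta>) (tgt C d')" using ty2 by simp
  obtain m where tm: "m \<in> Mor C" "src C m = R" "tgt C m = A" and em: "cmp C k' m = \<delta>"
    by (rule ker_ex[OF conf_ker[OF kd'] tde(1) _ dd]) (use ty2 in auto)
  note ty3 = ty2 tm
  have mk: "cmp C m \<kappa> = idm C A"
  proof (rule ker_mono[OF conf_ker[OF kd']])
    have "cmp C k' (cmp C m \<kappa>) = cmp C \<delta> \<kappa>" unfolding em[symmetric] by (rule assoc) (use ty3 in auto)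
    also have "\<dots> = madd C (cmp C (cmp C \<theta> r2) \<kappa>) (cmp C (mneg C r1) \<kappa>)"
      unfolding \<delta>_def by (rule bil_r) (use ty3 in auto)
    also have "cmp C (cmp C \<theta> r2) \<kappa> = cmp C \<theta> (cmp C r2 \<kappa>)" by (rule assoc[symmetric]) (use ty3 in auto)
    also have "\<dots> = k'" unfolding ek e1 ..
    also have "cmp C (mneg C r1) \<kappa> = mneg C (cmp C r1 \<kappa>)" by (rule cneg_l) (use ty3 in auto)
    also have "\<dots> = mzero C A B'" unfolding ek0 using ty3 by simp
    also have "madd C k' (mzero C A B') = k'" using ty3 by simp
    also have "k' = cmp C k' (idm C A)" using ty3 by simp
    finally show "cmp C k' (cmp C m \<kappa>) = cmp C k' (idm C A)" .
  qed (use ty3 in auto)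
  define e where "e = madd C (idm C R) (mneg C (cmp C \<kappa> m))"
  have te: "e \<in> Mor C" "src C e = R" "tgt C e = R" unfolding e_def using ty3 by auto
  note ty4 = ty3 te
  have kmk: "cmp C (cmp C \<kappa> m) \<kappa> = \<kappa>"
  proof -
    have "cmp C (cmp C \<kappa> m) \<kappa> = cmp C \<kappa> (cmp C m \<kappa>)" by (rule assoc[symmetric]) (use ty4 in auto)
    thus ?thesis unfolding mk using ty4 by simp
  qed
  have ee: "cmp C e \<kappa> = mzero C (src C \<kappa>) (tgt C e)"
  proof -
    have "cmp C e \<kappa> = madd C (cmp C (idm C R) \<kappa>) (cmp C (mneg C (cmp C \<kappa> m)) \<kappa>)"
      unfolding e_def by (rule bil_r) (use ty4 in auto)
    also have "cmp C (mneg C (cmp C \<kappa> m)) \<kappa> = mneg C (cmp C (cmp C \<kappa> m) \<kappa>)"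
      by (rule cneg_l) (use ty4 in auto)
    also have "\<dots> = mneg C \<kappa>" unfolding kmk ..
    also have "cmp C (idm C R) \<kappa> = \<kappa>" using ty4 by simp
    also have "madd C \<kappa> (mneg C \<kappa>) = mzero C A R" by (rule add_neg) (use ty4 in auto)
    finally show ?thesis using ty4 by simp
  qed
  obtain lm where tl: "lm \<in> Mor C" "src C lm = B'" "tgt C lm = R" and el: "cmp C lm r1 = e"
    by (rule coker_ex[OF conf_coker[OF kr1] te(1) _ ee]) (use ty4 in auto)
  note ty5 = ty4 tl
  have rl: "cmp C r1 lm = idm C B'"
  proof (rule coker_epi[OF conf_coker[OF kr1]])
    have "cmp C (cmp C r1 lm) r1 = cmp C r1 e" unfolding el[symmetric] by (rule assoc[symmetric]) (use ty5 in auto)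
    also have "\<dots> = madd C (cmp C r1 (idm C R)) (cmp C r1 (mneg C (cmp C \<kappa> m)))"
      unfolding e_def by (rule bil_l) (use ty5 in auto)
    also have "cmp C r1 (mneg C (cmp C \<kappa> m)) = mneg C (cmp C r1 (cmp C \<kappa> m))" by (rule cneg_r) (use ty5 in auto)
    also have "cmp C r1 (cmp C \<kappa> m) = cmp C (cmp C r1 \<kappa>) m" by (rule assoc) (use ty5 in auto)
    also have "\<dots> = mzero C R B'" unfolding ek0 using ty5 by simp
    also have "cmp C r1 (idm C R) = r1" using ty5 by simp
    also have "madd C r1 (mneg C (mzero C R B')) = r1" using ty5 by simp
    also have "r1 = cmp C (idm C B') r1" using ty5 by simp
    finally show "cmp C (cmp C r1 lm) r1 = cmp C (idm C B') r1" .
  qed (use ty5 in auto)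
  have ml: "cmp C m lm = mzero C B' A"
  proof (rule coker_epi[OF conf_coker[OF kr1]])
    have "cmp C (cmp C m lm) r1 = cmp C m e" unfolding el[symmetric] by (rule assoc[symmetric]) (use ty5 in auto)
    also have "\<dots> = madd C (cmp C m (idm C R)) (cmp C m (mneg C (cmp C \<kappa> m)))"
      unfolding e_def by (rule bil_l) (use ty5 in auto)
    also have "cmp C m (mneg C (cmp C \<kappa> m)) = mneg C (cmp C m (cmp C \<kappa> m))" by (rule cneg_r) (use ty5 in auto)
    also have "cmp C m (cmp C \<kappa> m) = cmp C (cmp C m \<kappa>) m" by (rule assoc) (use ty5 in auto)
    also have "\<dots> = m" unfolding mk using ty5 by simp
    also have "cmp C m (idm C R) = m" using ty5 by simp
    also have "madd C m (mneg C m) = mzero C R A" by (rule add_neg) (use ty5 in auto)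
    also have "\<dots> = cmp C (mzero C B' A) r1" using ty5 by simp
    finally show "cmp C (cmp C m lm) r1 = cmp C (mzero C B' A) r1" .
  qed (use ty5 in auto)
  have thr2: "cmp C \<theta> r2 = madd C (cmp C k' m) r1"
  proof -
    have "madd C (cmp C k' m) r1 = madd C (madd C (cmp C \<theta> r2) (mneg C r1)) r1" unfolding em \<delta>_def ..
    also have "\<dots> = madd C (cmp C \<theta> r2) (madd C (mneg C r1) r1)" by (rule add_assoc) (use ty5 in auto)
    also have "madd C (mneg C r1) r1 = mzero C R B'" by (rule neg_add) (use ty5 in auto)
    also have "madd C (cmp C \<theta> r2) (mzero C R B') = cmp C \<theta> r2" using ty5 by simp
    finally show ?thesis ..
  qed
  define \<rho> where "\<rho> = cmp C r2 lm"
  have trho: "\<rho> \<in> Mor C" "src C \<rho> = B'" "tgt C \<rho> = B" unfolding \<rho>_def using ty5 by auto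
  have inv1: "cmp C \<theta> \<rho> = idm C B'"
  proof -
    have "cmp C \<theta> \<rho> = cmp C (cmp C \<theta> r2) lm" unfolding \<rho>_def by (rule assoc) (use ty5 in auto)
    also have "\<dots> = madd C (cmp C (cmp C k' m) lm) (cmp C r1 lm)" unfolding thr2
      by (rule bil_r) (use ty5 in auto)
    also have "cmp C (cmp C k' m) lm = cmp C k' (cmp C m lm)" by (rule assoc[symmetric]) (use ty5 in auto)
    also have "\<dots> = mzero C B' B'" unfolding ml using ty5 by simp
    also have "madd C (mzero C B' B') (cmp C r1 lm) = idm C B'" unfolding rl using ty5 by simp
    finally show ?thesis .
  qed
  have ms: "cmp C m \<sigma> = mzero C B A"
  proof (rule ker_mono[OF conf_ker[OF kd']])
    have "cmp C k' (cmp C m \<sigma>) = cmp C \<delta> \<sigma>" unfolding em[symmetric] by (rule assoc) (use ty5 in auto)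
    also have "\<dots> = madd C (cmp C (cmp C \<theta> r2) \<sigma>) (cmp C (mneg C r1) \<sigma>)"
      unfolding \<delta>_def by (rule bil_r) (use ty5 in auto)
    also have "cmp C (cmp C \<theta> r2) \<sigma> = cmp C \<theta> (cmp C r2 \<sigma>)" by (rule assoc[symmetric]) (use ty5 in auto)
    also have "\<dots> = \<theta>" unfolding es2 using ty5 by simp
    also have "cmp C (mneg C r1) \<sigma> = mneg C (cmp C r1 \<sigma>)" by (rule cneg_l) (use ty5 in auto)
    also have "\<dots> = mneg C \<theta>" unfolding es1 ..
    also have "madd C \<theta> (mneg C \<theta>) = mzero C B B'" by (rule add_neg) (use ty5 in auto)
    also have "\<dots> = cmp C k' (mzero C B A)" using ty5 by simp
    finally show "cmp C k' (cmp C m \<sigma>) = cmp C k' (mzero C B A)" .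
  qed (use ty5 in auto)
  have id_dec: "madd C e (cmp C \<kappa> m) = idm C R"
  proof -
    have "madd C e (cmp C \<kappa> m) = madd C (idm C R) (madd C (mneg C (cmp C \<kappa> m)) (cmp C \<kappa> m))"
      unfolding e_def by (rule add_assoc) (use ty5 in auto)
    also have "madd C (mneg C (cmp C \<kappa> m)) (cmp C \<kappa> m) = mzero C R R" by (rule neg_add) (use ty5 in auto)
    also have "madd C (idm C R) (mzero C R R) = idm C R" using ty5 by simp
    finally show ?thesis .
  qed
  have ls: "cmp C lm \<theta> = \<sigma>"
  proof -
    have "\<sigma> = cmp C (madd C e (cmp C \<kappa> m)) \<sigma>" unfolding id_dec using ty5 by simp
    also have "\<dots> = madd C (cmp C e \<sigma>) (cmp C (cmp C \<kappa> m) \<sigma>)" by (rule bil_r) (use ty5 in auto)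
    also have "cmp C e \<sigma> = cmp C lm (cmp C r1 \<sigma>)" unfolding el[symmetric] by (rule assoc[symmetric]) (use ty5 in auto)
    also have "\<dots> = cmp C lm \<theta>" unfolding es1 ..
    also have "cmp C (cmp C \<kappa> m) \<sigma> = cmp C \<kappa> (cmp C m \<sigma>)" by (rule assoc[symmetric]) (use ty5 in auto)
    also have "\<dots> = mzero C B R" unfolding ms using ty5 by simp
    also have "madd C (cmp C lm \<theta>) (mzero C B R) = cmp C lm \<theta>" using ty5 by simp
    finally show ?thesis ..
  qed
  have inv2: "cmp C \<rho> \<theta> = idm C B"
  proof -
    have "cmp C \<rho> \<theta> = cmp C r2 (cmp C lm \<theta>)" unfolding \<rho>_def by (rule assoc[symmetric]) (use ty5 in auto)
    thus ?thesis unfolding ls es2 .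
  qed
  show ?thesis by (rule iso_intro[OF tth(1) trho(1)]) (use tth trho inv1 inv2 in auto)
qed

end


context dex
begin

lemma a3E: assumes "axiom_A3 C Cf AA" "inflation Cf a" "deflation Cf b" "src C a = src C b" "tgt C b \<in> AA"
  obtains r1 r2 where "is_pushout C a b r1 r2" "deflation Cf r1" "inflation Cf r2"
  using assms unfolding axiom_A3_def by blast

lemma main:
  assumes "AA \<subseteq> Ob C" and "AA \<noteq> {}" and A3: "axiom_A3 C Cf AA"
    and xy: "(x, y) \<in> Cf" and xy': "(x', y') \<in> Cf"
    and fh: "f \<in> hom C (src C x) (src C x')"
    and gh: "g \<in> hom C (tgt C x) (tgt C x')"
    and hh: "h \<in> hom C (tgt C y) (tgt C y')"
    and df: "deflation Cf f" and dg: "deflation Cf g" and dh: "deflation Cf h"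
    and c1: "cmp C g x = cmp C x' f" and c2: "cmp C h y = cmp C y' g"
    and inA: "src C x' \<in> AA"
  shows "\<exists>x'' y'' f'' g'' h''.
           (x'', y'') \<in> Cf \<and> (f'', f) \<in> Cf \<and> (g'', g) \<in> Cf \<and> (h'', h) \<in> Cf \<and>
           src C f'' = src C x'' \<and> src C g'' = tgt C x'' \<and> src C h'' = tgt C y'' \<and>
           cmp C x f'' = cmp C g'' x'' \<and> cmp C y g'' = cmp C h'' y'' \<and>
           is_pullback C x g'' f'' x'' \<and> is_pushout C y g h y'"
proof -
  note xyb = conf_basic[OF xy] and xyb' = conf_basic[OF xy']
  define X where "X = src C x"
  define Y where "Y = tgt C x"
  define Z where "Z = tgt C y"
  define X' where "X' = src C x'"
  define Y' where "Y' = tgt C x'"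
  define Z' where "Z' = tgt C y'"
  have tx: "x \<in> Mor C" "src C x = X" "tgt C x = Y" using xyb X_def Y_def by auto
  have ty: "y \<in> Mor C" "src C y = Y" "tgt C y = Z" using xyb Y_def Z_def by auto
  have tx': "x' \<in> Mor C" "src C x' = X'" "tgt C x' = Y'" using xyb' X'_def Y'_def by auto
  have ty': "y' \<in> Mor C" "src C y' = Y'" "tgt C y' = Z'" using xyb' Y'_def Z'_def by auto
  have tf: "f \<in> Mor C" "src C f = X" "tgt C f = X'" using fh X_def X'_def unfolding hom_def by auto
  have tg: "g \<in> Mor C" "src C g = Y" "tgt C g = Y'" using gh Y_def Y'_def unfolding hom_def by auto
  have th: "h \<in> Mor C" "src C h = Z" "tgt C h = Z'" using hh Z_def Z'_def unfolding hom_def by auto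
  have obs: "X \<in> Ob C" "Y \<in> Ob C" "Z \<in> Ob C" "X' \<in> Ob C" "Y' \<in> Ob C" "Z' \<in> Ob C"
    using tx ty tx' ty' by (metis Mor_src Mor_tgt)+
  have yx0: "cmp C y x = mzero C X Z" and yx0': "cmp C y' x' = mzero C X' Z'"
    using xyb xyb' tx ty tx' ty' by auto
  note T0 = tx ty tx' ty' tf tg th obs
  obtain f'' where ff: "(f'', f) \<in> Cf" using df unfolding deflation_def by blast
  obtain h'' where hh'': "(h'', h) \<in> Cf" using dh unfolding deflation_def by blast
  obtain gk where gg: "(gk, g) \<in> Cf" using dg unfolding deflation_def by blast
  define X'' where "X'' = src C f''"
  define Z'' where "Z'' = src C h''"
  have tf'': "f'' \<in> Mor C" "src C f'' = X''" "tgt C f'' = X" using conf_basic[OF ff] tf X''_def by auto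
  have th'': "h'' \<in> Mor C" "src C h'' = Z''" "tgt C h'' = Z" using conf_basic[OF hh''] th Z''_def by auto
  have obs2: "X'' \<in> Ob C" "Z'' \<in> Ob C" using tf'' th'' by (metis Mor_src)+
  have ff0: "cmp C f f'' = mzero C X'' X'" using conf_basic[OF ff] tf tf'' by simp
  have hh0: "cmp C h h'' = mzero C Z'' Z'" using conf_basic[OF hh''] th th'' by simp
  note T1 = T0 tf'' th'' obs2

  have "inflation Cf x" using xy unfolding inflation_def by blast
  then obtain p i where po: "is_pushout C x f p i" and dp: "deflation Cf p" and ii: "inflation Cf i"
    by (rule a3E[OF A3 _ df]) (use tx tf inA X'_def in auto)
  note pob = po_basic[OF po]
  define P where "P = tgt C p"
  have tp: "p \<in> Mor C" "src C p = Y" "tgt C p = P" using pob tx P_def by auto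
  have ti: "i \<in> Mor C" "src C i = X'" "tgt C i = P" using pob tf P_def by auto
  have obP: "P \<in> Ob C" using tp by (metis Mor_tgt)
  have epi: "cmp C p x = cmp C i f" using pob by simp
  note T2 = T1 tp ti obP

  obtain c where tc: "c \<in> Mor C" "src C c = P" "tgt C c = Z" and ecp: "cmp C c p = y"
      and eci: "cmp C c i = mzero C X' Z"
    by (rule po_ex[OF po ty(1), of "mzero C X' Z"]) (use T2 yx0 in auto)
  note T3 = T2 tc
  have cok: "is_cokernel C c i"
    unfolding is_cokernel_def
  proof (intro conjI ballI impI)
    show "i \<in> Mor C" "c \<in> Mor C" "tgt C i = src C c" "cmp C c i = mzero C (src C i) (tgt C c)"
      using T3 eci by auto
    fix T t assume T: "T \<in> Ob C" and t: "t \<in> hom C (tgt C i) T" and t0: "cmp C t i = mzero C (src C i) T"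
    have tt: "t \<in> Mor C" "src C t = P" "tgt C t = T" using t ti unfolding hom_def by auto
    have t0': "cmp C t i = mzero C X' T" using t0 ti by simp
    have "cmp C (cmp C t p) x = cmp C t (cmp C p x)" by (rule assoc[symmetric]) (use T3 tt in auto)
    also have "\<dots> = cmp C t (cmp C i f)" unfolding epi ..
    also have "\<dots> = cmp C (cmp C t i) f" by (rule assoc) (use T3 tt in auto)
    also have "\<dots> = mzero C X T" unfolding t0' using T3 T by simp
    finally have e0: "cmp C (cmp C t p) x = mzero C (src C x) (tgt C (cmp C t p))" using T3 tt by simp
    obtain s where ts: "s \<in> Mor C" "src C s = Z" "tgt C s = T" and es: "cmp C s y = cmp C t p"
      by (rule coker_ex[OF conf_coker[OF xy] _ _ e0]) (use T3 tt in auto)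
    have sc: "cmp C s c = t"
    proof (rule po_uniq[OF po])
      have "cmp C (cmp C s c) p = cmp C s (cmp C c p)" by (rule assoc[symmetric]) (use T3 tt ts in auto)
      also have "\<dots> = cmp C t p" unfolding ecp es ..
      finally show "cmp C (cmp C s c) p = cmp C t p" .
      have "cmp C (cmp C s c) i = cmp C s (cmp C c i)" by (rule assoc[symmetric]) (use T3 tt ts in auto)
      also have "\<dots> = mzero C X' T" unfolding eci using T3 ts by simp
      also have "\<dots> = cmp C t i" using t0' ..
      finally show "cmp C (cmp C s c) i = cmp C t i" .
    qed (use T3 tt ts in auto)
    show "\<exists>!u. u \<in> hom C (tgt C c) T \<and> cmp C u c = t"
    proof (rule ex1I[of _ s])
      show "s \<in> hom C (tgt C c) T \<and> cmp C s c = t" using ts tc sc unfolding hom_def by auto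
      fix u assume u: "u \<in> hom C (tgt C c) T \<and> cmp C u c = t"
      hence tu: "u \<in> Mor C" "src C u = Z" "tgt C u = T" and eu: "cmp C u c = t" using tc unfolding hom_def by auto
      show "u = s"
      proof (rule coker_epi[OF conf_coker[OF xy]])
        have "cmp C u y = cmp C u (cmp C c p)" unfolding ecp ..
        also have "\<dots> = cmp C (cmp C u c) p" by (rule assoc) (use T3 tu in auto)
        also have "\<dots> = cmp C (cmp C s c) p" unfolding eu sc ..
        also have "\<dots> = cmp C s (cmp C c p)" by (rule assoc[symmetric]) (use T3 ts in auto)
        also have "\<dots> = cmp C s y" unfolding ecp ..
        finally show "cmp C u y = cmp C s y" .
      qed (use T3 tu ts in auto)
    qed
  qed
  obtain c0 where "(i, c0) \<in> Cf" using ii unfolding inflation_def by blast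
  from coker_conf[OF this cok] have ic: "(i, c) \<in> Cf" .

  have "deflation Cf y'" using xy' unfolding deflation_def by blast
  then obtain qb qa where pbQ: "is_pullback C h y' qb qa" and dqb: "deflation Cf qb"
    using r2[of y' h] th ty' by auto
  note pbQb = pb_basic[OF pbQ]
  define Q where "Q = src C qb"
  have tqb: "qb \<in> Mor C" "src C qb = Q" "tgt C qb = Z" using pbQb Q_def th by auto
  have tqa: "qa \<in> Mor C" "src C qa = Q" "tgt C qa = Y'" using pbQb Q_def ty' by auto
  have obQ: "Q \<in> Ob C" using tqb by (metis Mor_src)
  have eQ: "cmp C h qb = cmp C y' qa" using pbQb by simp
  obtain k' where kq: "(k', qb) \<in> Cf" and ek': "cmp C qa k' = x'" and sk': "src C k' = src C x'"
    by (rule pb_ker[OF pbQ xy' dqb])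
  have tk': "k' \<in> Mor C" "src C k' = X'" "tgt C k' = Q" using conf_basic[OF kq] sk' tx' tqb by auto
  have ek0: "cmp C qb k' = mzero C X' Z" using conf_basic[OF kq] tk' tqb by simp
  note T4 = T3 tqb tqa obQ tk'

  obtain \<psi> where tps: "\<psi> \<in> Mor C" "src C \<psi> = Y" "tgt C \<psi> = Q" and eps1: "cmp C qb \<psi> = y"
      and eps2: "cmp C qa \<psi> = g"
    by (rule pb_ex[OF pbQ ty(1) tg(1)]) (use T4 c2 in auto)
  note T5 = T4 tps

  have pk: "cmp C \<psi> x = cmp C k' f"
  proof (rule pb_uniq[OF pbQ])
    have "cmp C qb (cmp C \<psi> x) = cmp C (cmp C qb \<psi>) x" by (rule assoc) (use T5 in auto)
    also have "\<dots> = mzero C X Z" unfolding eps1 yx0 ..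
    also have "\<dots> = cmp C (cmp C qb k') f" unfolding ek0 using T5 by simp
    also have "\<dots> = cmp C qb (cmp C k' f)" by (rule assoc[symmetric]) (use T5 in auto)
    finally show "cmp C qb (cmp C \<psi> x) = cmp C qb (cmp C k' f)" .
    have "cmp C qa (cmp C \<psi> x) = cmp C (cmp C qa \<psi>) x" by (rule assoc) (use T5 in auto)
    also have "\<dots> = cmp C x' f" unfolding eps2 c1 ..
    also have "\<dots> = cmp C (cmp C qa k') f" unfolding ek' ..
    also have "\<dots> = cmp C qa (cmp C k' f)" by (rule assoc[symmetric]) (use T5 in auto)
    finally show "cmp C qa (cmp C \<psi> x) = cmp C qa (cmp C k' f)" .
  qed (use T5 in auto)
  obtain \<theta> where tth: "\<theta> \<in> Mor C" "src C \<theta> = P" "tgt C \<theta> = Q" and eth1: "cmp C \<theta> p = \<psi>"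
      and eth2: "cmp C \<theta> i = k'"
    by (rule po_ex[OF po tps(1) tk'(1) _ _ _ pk]) (use T5 in auto)
  note T6 = T5 tth
  have qth: "cmp C qb \<theta> = c"
  proof (rule po_uniq[OF po])
    have "cmp C (cmp C qb \<theta>) p = cmp C qb (cmp C \<theta> p)" by (rule assoc[symmetric]) (use T6 in auto)
    also have "\<dots> = cmp C c p" unfolding eth1 eps1 ecp ..
    finally show "cmp C (cmp C qb \<theta>) p = cmp C c p" .
    have "cmp C (cmp C qb \<theta>) i = cmp C qb (cmp C \<theta> i)" by (rule assoc[symmetric]) (use T6 in auto)
    also have "\<dots> = cmp C c i" unfolding eth2 ek0 eci ..
    finally show "cmp C (cmp C qb \<theta>) i = cmp C c i" .
  qed (use T6 in auto)
  have iso: "iso C \<theta>"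
    by (rule five[OF ic kq tth(1) _ _ eth2 qth]) (use T6 in auto)

  obtain kp where kpp: "(kp, p) \<in> Cf" using dp unfolding deflation_def by blast
  have tkp: "kp \<in> Mor C" "tgt C kp = Y" using conf_basic[OF kpp] tp by auto
  have kpsi: "(kp, \<psi>) \<in> Cf"
    by (rule conf_iso[OF kpp tkp(1) tps(1) _ iso_id iso_id iso, of "src C kp" "tgt C kp"])
       (use T6 tkp eth1 in auto)

  have kerpsi: "is_kernel C (cmp C x f'') \<psi>"
    unfolding is_kernel_def
  proof (intro conjI ballI impI)
    show "cmp C x f'' \<in> Mor C" "\<psi> \<in> Mor C" "tgt C (cmp C x f'') = src C \<psi>" using T6 by auto
    have "cmp C \<psi> (cmp C x f'') = cmp C (cmp C \<psi> x) f''" by (rule assoc) (use T6 in auto)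
    also have "\<dots> = cmp C (cmp C k' f) f''" unfolding pk ..
    also have "\<dots> = cmp C k' (cmp C f f'')" by (rule assoc[symmetric]) (use T6 in auto)
    also have "\<dots> = mzero C X'' Q" unfolding ff0 using T6 by simp
    finally show "cmp C \<psi> (cmp C x f'') = mzero C (src C (cmp C x f'')) (tgt C \<psi>)" using T6 by simp
    fix T t assume T: "T \<in> Ob C" and t: "t \<in> hom C T (src C \<psi>)" and t0: "cmp C \<psi> t = mzero C T (tgt C \<psi>)"
    have tt: "t \<in> Mor C" "src C t = T" "tgt C t = Y" using t tps unfolding hom_def by auto
    have t0': "cmp C \<psi> t = mzero C T Q" using t0 tps by simp
    have "cmp C y t = cmp C (cmp C qb \<psi>) t" unfolding eps1 ..
    also have "\<dots> = cmp C qb (cmp C \<psi> t)" by (rule assoc[symmetric]) (use T6 tt in auto)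
    also have "\<dots> = mzero C T Z" unfolding t0' using T6 T by simp
    finally have yt: "cmp C y t = mzero C (src C t) (tgt C y)" using tt ty by simp
    obtain s where ts: "s \<in> Mor C" "src C s = T" "tgt C s = X" and es: "cmp C x s = t"
      by (rule ker_ex[OF conf_ker[OF xy] tt(1) _ yt]) (use tt T6 in auto)
    have fs: "cmp C f s = mzero C T X'"
    proof (rule ker_mono[OF conf_ker[OF kq]])
      have "cmp C k' (cmp C f s) = cmp C (cmp C k' f) s" by (rule assoc) (use T6 ts in auto)
      also have "\<dots> = cmp C (cmp C \<psi> x) s" unfolding pk ..
      also have "\<dots> = cmp C \<psi> (cmp C x s)" by (rule assoc[symmetric]) (use T6 ts in auto)
      also have "\<dots> = mzero C T Q" unfolding es t0' ..
      also have "\<dots> = cmp C k' (mzero C T X')" using T6 T by simp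
      finally show "cmp C k' (cmp C f s) = cmp C k' (mzero C T X')" .
    qed (use T6 ts T in auto)
    have fs': "cmp C f s = mzero C (src C s) (tgt C f)" using fs ts tf by simp
    obtain r where tr: "r \<in> Mor C" "src C r = T" "tgt C r = X''" and er: "cmp C f'' r = s"
      by (rule ker_ex[OF conf_ker[OF ff] ts(1) _ fs']) (use ts T6 in auto)
    show "\<exists>!u. u \<in> hom C T (src C (cmp C x f'')) \<and> cmp C (cmp C x f'') u = t"
    proof (rule ex1I[of _ r])
      have "cmp C (cmp C x f'') r = cmp C x (cmp C f'' r)" by (rule assoc[symmetric]) (use T6 tr in auto)
      also have "\<dots> = t" unfolding er es ..
      finally show "r \<in> hom C T (src C (cmp C x f'')) \<and> cmp C (cmp C x f'') r = t"
        using tr T6 unfolding hom_def by auto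
      fix u assume u: "u \<in> hom C T (src C (cmp C x f'')) \<and> cmp C (cmp C x f'') u = t"
      hence tu: "u \<in> Mor C" "src C u = T" "tgt C u = X''" and eu: "cmp C (cmp C x f'') u = t"
        using T6 unfolding hom_def by auto
      show "u = r"
      proof (rule ker_mono[OF conf_ker[OF ff]])
        show "cmp C f'' u = cmp C f'' r"
        proof (rule ker_mono[OF conf_ker[OF xy]])
          have "cmp C x (cmp C f'' u) = cmp C (cmp C x f'') u" by (rule assoc) (use T6 tu in auto)
          also have "\<dots> = cmp C x (cmp C f'' r)" unfolding eu er es ..
          finally show "cmp C x (cmp C f'' u) = cmp C x (cmp C f'' r)" .
        qed (use T6 tu tr in auto)
      qed (use T6 tu tr in auto)
    qed
  qed
  have xfpsi: "(cmp C x f'', \<psi>) \<in> Cf" by (rule ker_conf[OF kpsi kerpsi])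

  obtain k2 where tk2: "k2 \<in> Mor C" "src C k2 = Z''" "tgt C k2 = Q" and ek21: "cmp C qb k2 = h''"
      and ek22: "cmp C qa k2 = mzero C Z'' Y'"
    by (rule pb_ex[OF pbQ th''(1), of "mzero C Z'' Y'"]) (use T6 hh0 in auto)
  note T7 = T6 tk2
  have k2mono: "\<And>v1 v2. v1 \<in> Mor C \<Longrightarrow> v2 \<in> Mor C \<Longrightarrow> src C v2 = src C v1 \<Longrightarrow> tgt C v1 = Z'' \<Longrightarrow>
     tgt C v2 = Z'' \<Longrightarrow> cmp C k2 v1 = cmp C k2 v2 \<Longrightarrow> v1 = v2"
  proof -
    fix v1 v2 assume v: "v1 \<in> Mor C" "v2 \<in> Mor C" "src C v2 = src C v1" "tgt C v1 = Z''"
     "tgt C v2 = Z''" and e: "cmp C k2 v1 = cmp C k2 v2"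
    show "v1 = v2"
    proof (rule ker_mono[OF conf_ker[OF hh'']])
      have "cmp C h'' v1 = cmp C (cmp C qb k2) v1" unfolding ek21 ..
      also have "\<dots> = cmp C qb (cmp C k2 v1)" by (rule assoc[symmetric]) (use T7 v in auto)
      also have "\<dots> = cmp C qb (cmp C k2 v2)" unfolding e ..
      also have "\<dots> = cmp C (cmp C qb k2) v2" by (rule assoc) (use T7 v in auto)
      also have "\<dots> = cmp C h'' v2" unfolding ek21 ..
      finally show "cmp C h'' v1 = cmp C h'' v2" .
    qed (use T7 v in auto)
  qed

  have "deflation Cf \<psi>" using kpsi unfolding deflation_def by blast
  then obtain r1 r2 where pbR: "is_pullback C k2 \<psi> r1 r2" and dr1: "deflation Cf r1"
    using r2[of \<psi> k2] tk2 tps by auto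
  note pbRb = pb_basic[OF pbR]
  define R where "R = src C r1"
  have tr1: "r1 \<in> Mor C" "src C r1 = R" "tgt C r1 = Z''" using pbRb R_def tk2 by auto
  have tr2: "r2 \<in> Mor C" "src C r2 = R" "tgt C r2 = Y" using pbRb R_def tps by auto
  have obR: "R \<in> Ob C" using tr1 by (metis Mor_src)
  have eR: "cmp C k2 r1 = cmp C \<psi> r2" using pbRb by simp
  note T8 = T7 tr1 tr2 obR

  obtain x'' where xr1: "(x'', r1) \<in> Cf" and ex'': "cmp C r2 x'' = cmp C x f''"
      and sx'': "src C x'' = src C (cmp C x f'')"
    by (rule pb_ker[OF pbR xfpsi dr1])
  have tx'': "x'' \<in> Mor C" "src C x'' = X''" "tgt C x'' = R" using conf_basic[OF xr1] sx'' T8 by auto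
  note T9 = T8 tx''

  have kerg: "is_kernel C r2 g"
    unfolding is_kernel_def
  proof (intro conjI ballI impI)
    show "r2 \<in> Mor C" "g \<in> Mor C" "tgt C r2 = src C g" using T9 by auto
    have "cmp C g r2 = cmp C (cmp C qa \<psi>) r2" unfolding eps2 ..
    also have "\<dots> = cmp C qa (cmp C \<psi> r2)" by (rule assoc[symmetric]) (use T9 in auto)
    also have "\<dots> = cmp C qa (cmp C k2 r1)" unfolding eR ..
    also have "\<dots> = cmp C (cmp C qa k2) r1" by (rule assoc) (use T9 in auto)
    also have "\<dots> = mzero C R Y'" unfolding ek22 using T9 by simp
    finally show "cmp C g r2 = mzero C (src C r2) (tgt C g)" using T9 by simp
    fix T t assume T: "T \<in> Ob C" and t: "t \<in> hom C T (src C g)" and t0: "cmp C g t = mzero C T (tgt C g)"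
    have tt: "t \<in> Mor C" "src C t = T" "tgt C t = Y" using t tg unfolding hom_def by auto
    have t0': "cmp C g t = mzero C T Y'" using t0 tg by simp
    let ?a = "cmp C qb (cmp C \<psi> t)"
    have "cmp C h ?a = cmp C (cmp C h qb) (cmp C \<psi> t)" by (rule assoc) (use T9 tt in auto)
    also have "\<dots> = cmp C (cmp C y' qa) (cmp C \<psi> t)" unfolding eQ ..
    also have "\<dots> = cmp C y' (cmp C qa (cmp C \<psi> t))" by (rule assoc[symmetric]) (use T9 tt in auto)
    also have "cmp C qa (cmp C \<psi> t) = cmp C (cmp C qa \<psi>) t" by (rule assoc) (use T9 tt in auto)
    also have "\<dots> = mzero C T Y'" unfolding eps2 t0' ..
    also have "cmp C y' (mzero C T Y') = mzero C T Z'" using T9 T by simp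
    finally have ha: "cmp C h ?a = mzero C (src C ?a) (tgt C h)" using T9 tt by simp
    obtain s where ts: "s \<in> Mor C" "src C s = T" "tgt C s = Z''" and es: "cmp C h'' s = ?a"
      by (rule ker_ex[OF conf_ker[OF hh''] _ _ ha]) (use T9 tt in auto)
    have pst: "cmp C k2 s = cmp C \<psi> t"
    proof (rule pb_uniq[OF pbQ])
      have "cmp C qb (cmp C k2 s) = cmp C (cmp C qb k2) s" by (rule assoc) (use T9 ts in auto)
      also have "\<dots> = ?a" unfolding ek21 es ..
      finally show "cmp C qb (cmp C k2 s) = ?a" .
      have "cmp C qa (cmp C k2 s) = cmp C (cmp C qa k2) s" by (rule assoc) (use T9 ts in auto)
      also have "\<dots> = mzero C T Y'" unfolding ek22 using T9 ts by simp
      also have "\<dots> = cmp C (cmp C qa \<psi>) t" unfolding eps2 t0' ..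
      also have "\<dots> = cmp C qa (cmp C \<psi> t)" by (rule assoc[symmetric]) (use T9 tt in auto)
      finally show "cmp C qa (cmp C k2 s) = cmp C qa (cmp C \<psi> t)" .
    qed (use T9 ts tt in auto)
    obtain w where tw: "w \<in> Mor C" "src C w = T" "tgt C w = R" and ew1: "cmp C r1 w = s" and ew2: "cmp C r2 w = t"
      by (rule pb_ex[OF pbR ts(1) tt(1) _ _ _ pst]) (use T9 ts tt in auto)
    show "\<exists>!u. u \<in> hom C T (src C r2) \<and> cmp C r2 u = t"
    proof (rule ex1I[of _ w])
      show "w \<in> hom C T (src C r2) \<and> cmp C r2 w = t" using tw ew2 T9 unfolding hom_def by auto
      fix u assume u: "u \<in> hom C T (src C r2) \<and> cmp C r2 u = t"
      hence tu: "u \<in> Mor C" "src C u = T" "tgt C u = R" and eu: "cmp C r2 u = t"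
        using T9 unfolding hom_def by auto
      show "u = w"
      proof (rule pb_uniq[OF pbR])
        show "cmp C r1 u = cmp C r1 w"
        proof (rule k2mono)
          have "cmp C k2 (cmp C r1 u) = cmp C (cmp C k2 r1) u" by (rule assoc) (use T9 tu in auto)
          also have "\<dots> = cmp C (cmp C \<psi> r2) u" unfolding eR ..
          also have "\<dots> = cmp C \<psi> (cmp C r2 u)" by (rule assoc[symmetric]) (use T9 tu in auto)
          also have "\<dots> = cmp C \<psi> (cmp C r2 w)" unfolding eu ew2 ..
          also have "\<dots> = cmp C (cmp C \<psi> r2) w" by (rule assoc) (use T9 tw in auto)
          also have "\<dots> = cmp C (cmp C k2 r1) w" unfolding eR ..
          also have "\<dots> = cmp C k2 (cmp C r1 w)" by (rule assoc[symmetric]) (use T9 tw in auto)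
          finally show "cmp C k2 (cmp C r1 u) = cmp C k2 (cmp C r1 w)" .
        qed (use T9 tu tw in auto)
        show "cmp C r2 u = cmp C r2 w" unfolding eu ew2 ..
      qed (use T9 tu tw in auto)
    qed
  qed
  have r2g: "(r2, g) \<in> Cf" by (rule ker_conf[OF gg kerg])

  have sq2: "cmp C y r2 = cmp C h'' r1"
  proof -
    have "cmp C y r2 = cmp C (cmp C qb \<psi>) r2" unfolding eps1 ..
    also have "\<dots> = cmp C qb (cmp C \<psi> r2)" by (rule assoc[symmetric]) (use T9 in auto)
    also have "\<dots> = cmp C qb (cmp C k2 r1)" unfolding eR ..
    also have "\<dots> = cmp C (cmp C qb k2) r1" by (rule assoc) (use T9 in auto)
    also have "\<dots> = cmp C h'' r1" unfolding ek21 ..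
    finally show ?thesis .
  qed
  have pbfin: "is_pullback C x r2 f'' x''"
    unfolding is_pullback_def
  proof (intro conjI ballI impI)
    show "x \<in> Mor C" "r2 \<in> Mor C" "tgt C x = tgt C r2" using T9 by auto
    show "f'' \<in> hom C (src C f'') (src C x)" "x'' \<in> hom C (src C f'') (src C r2)"
      using T9 unfolding hom_def by auto
    show "cmp C x f'' = cmp C r2 x''" using ex'' by simp
    fix T u v assume T: "T \<in> Ob C" and u: "u \<in> hom C T (src C x)" and v: "v \<in> hom C T (src C r2)"
      and uv: "cmp C x u = cmp C r2 v"
    have tu: "u \<in> Mor C" "src C u = T" "tgt C u = X" using u tx unfolding hom_def by auto
    have tv: "v \<in> Mor C" "src C v = T" "tgt C v = R" using v tr2 unfolding hom_def by auto
    have r1v: "cmp C r1 v = mzero C T Z''"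
    proof (rule ker_mono[OF conf_ker[OF hh'']])
      have "cmp C h'' (cmp C r1 v) = cmp C (cmp C qb k2) (cmp C r1 v)" unfolding ek21 ..
      also have "\<dots> = cmp C qb (cmp C k2 (cmp C r1 v))" by (rule assoc[symmetric]) (use T9 tv in auto)
      also have "cmp C k2 (cmp C r1 v) = cmp C (cmp C k2 r1) v" by (rule assoc) (use T9 tv in auto)
      also have "\<dots> = cmp C (cmp C \<psi> r2) v" unfolding eR ..
      also have "\<dots> = cmp C \<psi> (cmp C r2 v)" by (rule assoc[symmetric]) (use T9 tv in auto)
      also have "\<dots> = cmp C \<psi> (cmp C x u)" unfolding uv ..
      also have "\<dots> = cmp C (cmp C \<psi> x) u" by (rule assoc) (use T9 tu in auto)
      also have "\<dots> = cmp C (cmp C k' f) u" unfolding pk ..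
      also have "\<dots> = cmp C k' (cmp C f u)" by (rule assoc[symmetric]) (use T9 tu in auto)
      also have "cmp C qb (cmp C k' (cmp C f u)) = cmp C (cmp C qb k') (cmp C f u)" by (rule assoc) (use T9 tu in auto)
      also have "\<dots> = mzero C T Z" unfolding ek0 using T9 tu by simp
      also have "\<dots> = cmp C h'' (mzero C T Z'')" using T9 T by simp
      finally show "cmp C h'' (cmp C r1 v) = cmp C h'' (mzero C T Z'')" .
    qed (use T9 tv T in auto)
    have r1v': "cmp C r1 v = mzero C (src C v) (tgt C r1)" using r1v tv tr1 by simp
    obtain w where tw: "w \<in> Mor C" "src C w = T" "tgt C w = X''" and ew: "cmp C x'' w = v"
      by (rule ker_ex[OF conf_ker[OF xr1] tv(1) _ r1v']) (use T9 tv in auto)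
    have fw: "cmp C f'' w = u"
    proof (rule ker_mono[OF conf_ker[OF xy]])
      have "cmp C x (cmp C f'' w) = cmp C (cmp C x f'') w" by (rule assoc) (use T9 tw in auto)
      also have "\<dots> = cmp C (cmp C r2 x'') w" unfolding ex'' ..
      also have "\<dots> = cmp C r2 (cmp C x'' w)" by (rule assoc[symmetric]) (use T9 tw in auto)
      also have "\<dots> = cmp C x u" unfolding ew uv ..
      finally show "cmp C x (cmp C f'' w) = cmp C x u" .
    qed (use T9 tw tu in auto)
    show "\<exists>!w. w \<in> hom C T (src C f'') \<and> cmp C f'' w = u \<and> cmp C x'' w = v"
    proof (rule ex1I[of _ w])
      show "w \<in> hom C T (src C f'') \<and> cmp C f'' w = u \<and> cmp C x'' w = v"
        using tw fw ew T9 unfolding hom_def by auto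
      fix w' assume w': "w' \<in> hom C T (src C f'') \<and> cmp C f'' w' = u \<and> cmp C x'' w' = v"
      hence tw': "w' \<in> Mor C" "src C w' = T" "tgt C w' = X''" and ew': "cmp C x'' w' = v"
        using T9 unfolding hom_def by auto
      show "w' = w"
        by (rule ker_mono[OF conf_ker[OF xr1]]) (use T9 tw tw' ew ew' in auto)
    qed
  qed
  have pofin: "is_pushout C y g h y'"
    unfolding is_pushout_def
  proof (intro conjI ballI impI)
    show "y \<in> Mor C" "g \<in> Mor C" "src C y = src C g" using T9 by auto
    show "h \<in> hom C (tgt C y) (tgt C h)" "y' \<in> hom C (tgt C g) (tgt C h)"
      using T9 unfolding hom_def by auto
    show "cmp C h y = cmp C y' g" by (rule c2)
    fix T u v assume T: "T \<in> Ob C" and u: "u \<in> hom C (tgt C y) T" and v: "v \<in> hom C (tgt C g) T"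
      and uv: "cmp C u y = cmp C v g"
    have tu: "u \<in> Mor C" "src C u = Z" "tgt C u = T" using u ty unfolding hom_def by auto
    have tv: "v \<in> Mor C" "src C v = Y'" "tgt C v = T" using v tg unfolding hom_def by auto
    have vx: "cmp C v x' = mzero C X' T"
    proof (rule coker_epi[OF conf_coker[OF ff]])
      have "cmp C (cmp C v x') f = cmp C v (cmp C x' f)" by (rule assoc[symmetric]) (use T9 tv in auto)
      also have "\<dots> = cmp C v (cmp C g x)" unfolding c1 ..
      also have "\<dots> = cmp C (cmp C v g) x" by (rule assoc) (use T9 tv in auto)
      also have "\<dots> = cmp C (cmp C u y) x" unfolding uv ..
      also have "\<dots> = cmp C u (cmp C y x)" by (rule assoc[symmetric]) (use T9 tu in auto)
      also have "\<dots> = mzero C X T" unfolding yx0 using T9 tu by simp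
      also have "\<dots> = cmp C (mzero C X' T) f" using T9 T by simp
      finally show "cmp C (cmp C v x') f = cmp C (mzero C X' T) f" .
    qed (use T9 tv T in auto)
    have vx': "cmp C v x' = mzero C (src C x') (tgt C v)" using vx tv tx' by simp
    obtain w where tw: "w \<in> Mor C" "src C w = Z'" "tgt C w = T" and ew: "cmp C w y' = v"
      by (rule coker_ex[OF conf_coker[OF xy'] tv(1) _ vx']) (use T9 tv in auto)
    have wh: "cmp C w h = u"
    proof (rule coker_epi[OF conf_coker[OF xy]])
      have "cmp C (cmp C w h) y = cmp C w (cmp C h y)" by (rule assoc[symmetric]) (use T9 tw in auto)
      also have "\<dots> = cmp C w (cmp C y' g)" unfolding c2 ..
      also have "\<dots> = cmp C (cmp C w y') g" by (rule assoc) (use T9 tw in auto)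
      also have "\<dots> = cmp C u y" unfolding ew uv ..
      finally show "cmp C (cmp C w h) y = cmp C u y" .
    qed (use T9 tw tu in auto)
    show "\<exists>!w. w \<in> hom C (tgt C h) T \<and> cmp C w h = u \<and> cmp C w y' = v"
    proof (rule ex1I[of _ w])
      show "w \<in> hom C (tgt C h) T \<and> cmp C w h = u \<and> cmp C w y' = v"
        using tw wh ew T9 unfolding hom_def by auto
      fix w' assume w': "w' \<in> hom C (tgt C h) T \<and> cmp C w' h = u \<and> cmp C w' y' = v"
      hence tw': "w' \<in> Mor C" "src C w' = Z'" "tgt C w' = T" and ew': "cmp C w' y' = v"
        using T9 unfolding hom_def by auto
      show "w' = w"
        by (rule coker_epi[OF conf_coker[OF xy']]) (use T9 tw tw' ew ew' in auto)
    qed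
  qed
  show ?thesis
    apply (rule exI[of _ x''], rule exI[of _ r1], rule exI[of _ f''], rule exI[of _ r2], rule exI[of _ h''])
    using xr1 ff r2g hh'' tx'' tf'' tr1 tr2 th'' ex'' sq2 pbfin pofin by auto
qed

end

theorem mainTheorem6:
  fixes C :: "('o, 'm, 'x) addcat_scheme" and Cf :: "('m \<times> 'm) set" and AA :: "'o set"
  assumes "deflation_exact C Cf"
    and "AA \<subseteq> Ob C" and "AA \<noteq> {}" and "axiom_A3 C Cf AA"
    and "(x, y) \<in> Cf" and "(x', y') \<in> Cf"
    and "f \<in> hom C (src C x) (src C x')"
    and "g \<in> hom C (tgt C x) (tgt C x')"
    and "h \<in> hom C (tgt C y) (tgt C y')"
    and "deflation Cf f" and "deflation Cf g" and "deflation Cf h"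
    and "cmp C g x = cmp C x' f" and "cmp C h y = cmp C y' g"
    and "src C x' \<in> AA"
  shows "\<exists>x'' y'' f'' g'' h''.
           (x'', y'') \<in> Cf \<and> (f'', f) \<in> Cf \<and> (g'', g) \<in> Cf \<and> (h'', h) \<in> Cf \<and>
           src C f'' = src C x'' \<and> src C g'' = tgt C x'' \<and> src C h'' = tgt C y'' \<and>
           cmp C x f'' = cmp C g'' x'' \<and> cmp C y g'' = cmp C h'' y'' \<and>
           is_pullback C x g'' f'' x'' \<and> is_pushout C y g h y'"
proof -
  interpret dex C Cf by (rule dex.intro) (rule assms(1))
  show ?thesis by (rule main[OF assms(2-15)])
qed

end
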